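(* Let $F=\{\mathbf{p}_0,\ldots,\mathbf{p}_n\}\subset\mathbb{R}^d$ be not contained in any $(d-1)$-dimensional affine subspace and let $k\ge1$. There exists a set $\mathcal{O}\subseteq\mathcal{P}_k$ which is open and dense in $\mathcal{P}_k$ such that for every $(\lambda_0,\ldots,\lambda_n)\in\mathcal{O}$, for the IFS $S_i(\mathbf{x})=\lambda_i\mathbf{x}+(1-\lambda_i)\mathbf{p}_i$ ($i=0,\ldots,n$), the set $X_k$ contains an open dense subset of $X$ and Lebesgue almost every $\mathbf{x}\in X$ belongs to $X_k$.
   Context: Write $\mathcal{D}=\{0,\ldots,n\}$ and $\mathcal{P}_k=\{(\lambda_i)_{i\in\mathcal{D}}:\lambda_i\in(0,1),\ \prod_{i\in\mathcal{D}}\lambda_i^{k(n+1)^{k-1}}\ge\frac{d}{d+1}\}$, with the topology inherited from $\mathbb{R}^{n+1}$. $X$ is the unique non-empty compact set with $X=\bigcup_{i\in\mathcal{D}}S_i(X)$; "open dense subset of $X$" refers to the relative topology of $X$. The coding map is $\pi(\mathbf{a})=\lim_{j\to\infty}(S_{a_1}\circ\cdots\circ S_{a_j})(\mathbf{0})$. For $\mathbf{b}\in\mathcal{D}^k$, $\mathrm{freq}_{\mathbf{b}}(\mathbf{a})=\lim_{m\to\infty}\frac1m\#\{1\le j\le m:a_j\cdots a_{j+k-1}=\mathbf{b}\}$; $\mathbf{a}$ is $k$-simply normal if this equals $(n+1)^{-k}$ for all $\mathbf{b}\in\mathcal{D}^k$. $X_k$ is the set of $\mathbf{x}\in X$ having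 a $k$-simply normal $\mathbf{a}$ with $\pi(\mathbf{a})=\mathbf{x}$. *)

theory Defs
  imports "HOL-Analysis.Analysis"
begin

text \<open>Digit set D = {0,...,n} is modelled by a finite type 'i with CARD('i) = n+1.
  Parameters (lambda_i) live in real^'i (= R^(n+1) with its Euclidean topology).\<close>

definition ifs_map :: "real^'i \<Rightarrow> ('i \<Rightarrow> 'a::real_vector) \<Rightarrow> 'i \<Rightarrow> 'a \<Rightarrow> 'a" where
  "ifs_map lam p i x = (lam $ i) *\<^sub>R x + (1 - lam $ i) *\<^sub>R p i"

definition param_set :: "nat \<Rightarrow> nat \<Rightarrow> (real^'i::finite) set" where
  "param_set d k = {lam. (\<forall>i. 0 < lam $ i \<and> lam $ i < 1) \<and>
      (\<Prod>i\<in>UNIV. (lam $ i) ^ (k * CARD('i) ^ (k - 1))) \<ge> real d / (real d + 1)}"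

definition attractor :: "('i::finite \<Rightarrow> 'a::metric_space \<Rightarrow> 'a) \<Rightarrow> 'a set" where
  "attractor S = (THE X. compact X \<and> X \<noteq> {} \<and> X = (\<Union>i. S i ` X))"

text \<open>compose S a j = S (a 0) o ... o S (a (j-1)), i.e. S_{a_1} o ... o S_{a_j}
  with the paper's 1-based indexing shifted to 0-based.\<close>
primrec compose :: "('i \<Rightarrow> 'a \<Rightarrow> 'a) \<Rightarrow> (nat \<Rightarrow> 'i) \<Rightarrow> nat \<Rightarrow> 'a \<Rightarrow> 'a" where
  "compose S a 0 = id"
| "compose S a (Suc j) = compose S a j \<circ> S (a j)"

definition coding :: "('i \<Rightarrow> 'a::real_normed_vector \<Rightarrow> 'a) \<Rightarrow> (nat \<Rightarrow> 'i) \<Rightarrow> 'a" where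
  "coding S a = lim (\<lambda>j. compose S a j 0)"

text \<open>freq_b(a) = lim_m (1/m) #{1 <= j <= m : a_j ... a_{j+k-1} = b}, 0-based.\<close>
definition block_count :: "(nat \<Rightarrow> 'i) \<Rightarrow> 'i list \<Rightarrow> nat \<Rightarrow> nat" where
  "block_count a b m = card {j. j < m \<and> map a [j..<j + length b] = b}"

definition simply_normal :: "nat \<Rightarrow> (nat \<Rightarrow> 'i::finite) \<Rightarrow> bool" where
  "simply_normal k a \<longleftrightarrow> (\<forall>b::'i list. length b = k \<longrightarrow>
      (\<lambda>m. real (block_count a b m) / real m) \<longlonglongrightarrow> 1 / real (CARD('i)) ^ k)"

definition normal_points :: "nat \<Rightarrow> ('i::finite \<Rightarrow> 'a::real_normed_vector \<Rightarrow> 'a) \<Rightarrow> 'a set" where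
  "normal_points k S = {x \<in> attractor S. \<exists>a. simply_normal k a \<and> coding S a = x}"

end

theory Submission
  imports Defs
begin


lemma density_negligible:
  fixes E :: "'a::euclidean_space set"
  assumes E: "E \<in> lmeasurable" and c: "c > 0"
    and dens: "\<And>x d. x \<in> E \<Longrightarrow> d > 0 \<Longrightarrow>
        \<exists>r. 0 < r \<and> r < d \<and> c * measure lebesgue (ball x r) \<le> measure lebesgue (ball x r - E)"
  shows "negligible E"
proof -
  let ?\<mu> = "measure lebesgue"
  have bnd: "?\<mu> E \<le> e / c" if e: "e > 0" for e
  proof -
    obtain T where T: "open T" "E \<subseteq> T" "(T - E) \<in> lmeasurable" "emeasure lebesgue (T - E) < ennreal e"
      using sets_lebesgue_outer_open[of E e] E e fmeasurableD by blast
    have Tm: "?\<mu> (T - E) < e"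
      proof -
      have "ennreal (?\<mu> (T-E)) < ennreal e" using T(3,4) by (simp add: emeasure_eq_measure2)
      then show ?thesis by (simp add: ennreal_less_iff[OF measure_nonneg])
    qed
    define K where "K = {(x,r). x \<in> E \<and> 0 < r \<and> ball x r \<subseteq> T \<and>
        c * ?\<mu> (ball x r) \<le> ?\<mu> (ball x r - E)}"
    have cov: "\<exists>i. i \<in> K \<and> x \<in> ball (fst i) (snd i) \<and> snd i < d" if xE: "x \<in> E" and dpos: "d > 0" for x d
    proof -
      obtain d1 where d1: "d1 > 0" "ball x d1 \<subseteq> T"
      proof -
        have "x \<in> T" using T(2) xE by (rule subsetD)
        then show ?thesis using T(1) that by (metis open_contains_ball)
      qed
      obtain r where r: "0 < r" "r < min d d1" "c * ?\<mu> (ball x r) \<le> ?\<mu> (ball x r - E)"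
        using dens[of x "min d d1"] xE dpos d1 by auto
      have "ball x r \<subseteq> ball x d1" by (rule subset_ball) (use r in simp)
      then have "ball x r \<subseteq> T" using d1(2) by (rule order_trans)
      then have "(x,r) \<in> K" using r xE by (auto simp: K_def)
      then show ?thesis using r by (intro exI[of _ "(x,r)"]) auto
    qed
    obtain C where C: "countable C" "C \<subseteq> K"
      and pw: "pairwise (\<lambda>i j. disjnt (ball (fst i) (snd i)) (ball (fst j) (snd j))) C"
      and neg: "negligible (E - (\<Union>i \<in> C. ball (fst i) (snd i)))"
      by (rule Vitali_covering_theorem_balls[of E K fst snd]) (use cov in blast)+
    have fin: "?\<mu> (\<Union>i\<in>F. E \<inter> ball (fst i) (snd i)) \<le> e / c" if F: "F \<subseteq> C" "finite F" for F
    proof -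
      have "?\<mu> (\<Union>i\<in>F. E \<inter> ball (fst i) (snd i)) \<le> (\<Sum>i\<in>F. ?\<mu> (E \<inter> ball (fst i) (snd i)))"
        by (rule measure_UNION_le) (use F E in \<open>auto intro: fmeasurableD\<close>)
      also have "\<dots> \<le> (\<Sum>i\<in>F. ?\<mu> (ball (fst i) (snd i) - E) / c)"
      proof (rule sum_mono)
        fix i assume "i \<in> F"
        then have i: "c * ?\<mu> (ball (fst i) (snd i)) \<le> ?\<mu> (ball (fst i) (snd i) - E)"
          using F C by (auto simp: K_def split: prod.splits)
        have "?\<mu> (E \<inter> ball (fst i) (snd i)) \<le> ?\<mu> (ball (fst i) (snd i))"
          by (rule measure_mono_fmeasurable) (use E in auto)
        moreover have "?\<mu> (ball (fst i) (snd i)) \<le> ?\<mu> (ball (fst i) (snd i) - E) / c"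
          using i c by (simp add: pos_le_divide_eq mult.commute)
        ultimately show "?\<mu> (E \<inter> ball (fst i) (snd i)) \<le> ?\<mu> (ball (fst i) (snd i) - E) / c"
          by (rule order_trans)
      qed
      also have "\<dots> = (\<Sum>i\<in>F. ?\<mu> (ball (fst i) (snd i) - E)) / c"
        by (simp add: sum_divide_distrib)
      also have "(\<Sum>i\<in>F. ?\<mu> (ball (fst i) (snd i) - E)) \<le> ?\<mu> (T - E)"
      proof -
      have "(\<Sum>i\<in>F. ?\<mu> (ball (fst i) (snd i) - E)) = ?\<mu> (\<Union>i\<in>F. ball (fst i) (snd i) - E)"
      proof (rule measure_UNION'[symmetric])
        show "finite F" by fact
        show "\<And>i. i \<in> F \<Longrightarrow> ball (fst i) (snd i) - E \<in> fmeasurable lebesgue"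
          using E by (auto intro: fmeasurable_Diff)
        show "pairwise (\<lambda>i j. disjnt (ball (fst i) (snd i) - E) (ball (fst j) (snd j) - E)) F"
          using pw F unfolding pairwise_def disjnt_def by blast
      qed
      also have "\<dots> \<le> ?\<mu> (T - E)"
      proof (rule measure_mono_fmeasurable)
        have "ball (fst i) (snd i) \<subseteq> T" if "i \<in> F" for i
        proof -
          have "i \<in> K" using that F C by blast
          then show ?thesis by (cases i) (simp add: K_def)
        qed
        then show "(\<Union>i\<in>F. ball (fst i) (snd i) - E) \<subseteq> T - E" by blast
        show "(\<Union>i\<in>F. ball (fst i) (snd i) - E) \<in> sets lebesgue"
          using F E by (intro sets.finite_UN) (auto intro: fmeasurableD)
        show "T - E \<in> fmeasurable lebesgue" using T(3) by simp
      qed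
      finally show ?thesis .
      qed
      then have "(\<Sum>i\<in>F. ?\<mu> (ball (fst i) (snd i) - E)) / c \<le> ?\<mu> (T - E) / c"
        using c by (simp add: divide_right_mono)
      also have "?\<mu> (T - E) / c \<le> e / c" using Tm c by (simp add: divide_right_mono)
      finally show ?thesis by this
    qed
    have "?\<mu> (\<Union>i\<in>C. E \<inter> ball (fst i) (snd i)) \<le> e / c"
      by (rule measure_UN_bound[OF C(1) _ fin]) (use E in \<open>auto intro: fmeasurable.Int\<close>)
    moreover have "?\<mu> E = ?\<mu> (\<Union>i\<in>C. E \<inter> ball (fst i) (snd i))"
    proof -
      have eq: "(\<Union>i\<in>C. E \<inter> ball (fst i) (snd i)) = E - (E - (\<Union>i \<in> C. ball (fst i) (snd i)))" by blast
      show ?thesis unfolding eq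
        by (rule measure_Diff_null_set[symmetric]) (use E neg in \<open>auto simp: negligible_iff_null_sets\<close>)
    qed
    ultimately show ?thesis by simp
  qed
  have "?\<mu> E = 0"
  proof (rule antisym)
    show "?\<mu> E \<le> 0"
    proof (rule field_le_epsilon)
      fix e :: real assume "e > 0"
      then show "?\<mu> E \<le> 0 + e" using bnd[of "e * c"] c by simp
    qed
  qed simp
  then show ?thesis using E negligible_iff_measure0 by blast
qed


locale hifs =
  fixes lam :: "real^'i::finite" and p :: "'i \<Rightarrow> 'a::euclidean_space"
  assumes lam_pos: "\<And>i. 0 < lam $ i" and lam_lt1: "\<And>i. lam $ i < 1"
begin

abbreviation S where "S \<equiv> ifs_map lam p"

definition rr :: real where "rr = Max (range (\<lambda>i. lam $ i))"
definition Mp :: real where "Mp = Max (range (\<lambda>i. norm (p i)))"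

lemma lam_le_rr: "lam $ i \<le> rr"
  unfolding rr_def by (rule Max_ge) auto

lemma rr_lt1: "rr < 1"
proof -
  have "rr \<in> range (\<lambda>i. lam $ i)" unfolding rr_def by (rule Max_in) auto
  then show ?thesis using lam_lt1 by auto
qed

lemma rr_pos: "0 < rr"
  using lam_le_rr[of undefined] lam_pos[of undefined] by linarith

lemma norm_p_le: "norm (p i) \<le> Mp"
  unfolding Mp_def by (rule Max_ge) auto

lemma Mp_nonneg: "0 \<le> Mp"
  using norm_p_le[of undefined] norm_ge_zero[of "p undefined"] by linarith

fun wm :: "'i list \<Rightarrow> 'a \<Rightarrow> 'a" where
  "wm [] y = y"
| "wm (i # u) y = S i (wm u y)"

definition sc :: "'i list \<Rightarrow> real" where
  "sc u = prod_list (map (\<lambda>i. lam $ i) u)"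

lemma sc_Nil[simp]: "sc [] = 1" and sc_Cons[simp]: "sc (i # u) = lam $ i * sc u"
  by (simp_all add: sc_def)

lemma sc_append: "sc (u @ v) = sc u * sc v"
  by (simp add: sc_def)

lemma sc_pos: "0 < sc u"
  by (induction u) (auto intro: mult_pos_pos lam_pos)

lemma sc_le: "sc u \<le> rr ^ length u"
proof (induction u)
  case (Cons i u)
  then show ?case using lam_le_rr[of i] sc_pos[of u] lam_pos[of i]
    by (simp add: mult_mono')
qed simp

lemma sc_le1: "sc u \<le> 1"
  using sc_le[of u] rr_lt1 rr_pos by (meson less_imp_le order_trans power_le_one)

lemma S_def': "S i y = lam $ i *\<^sub>R y + (1 - lam $ i) *\<^sub>R p i"
  by (simp add: ifs_map_def)

lemma wm_affine: "wm u y = sc u *\<^sub>R y + wm u 0"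
  by (induction u) (simp_all add: S_def' algebra_simps)

lemma wm_append: "wm (u @ v) y = wm u (wm v y)"
  by (induction u) auto

lemma dist_wm: "dist (wm u y) (wm u y') = sc u * dist y y'"
proof -
  have "wm u y - wm u y' = sc u *\<^sub>R (y - y')"
    by (subst (1 2) wm_affine) (simp add: algebra_simps)
  then show ?thesis using sc_pos[of u] by (simp add: dist_norm)
qed

lemma norm_S_le: "norm y \<le> Mp \<Longrightarrow> norm (S i y) \<le> Mp"
proof -
  assume y: "norm y \<le> Mp"
  have "norm (S i y) \<le> norm (lam $ i *\<^sub>R y) + norm ((1 - lam $ i) *\<^sub>R p i)"
    unfolding S_def' by (rule norm_triangle_ineq)
  also have "\<dots> = lam $ i * norm y + (1 - lam $ i) * norm (p i)"
    using lam_pos[of i] lam_lt1[of i] by simp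
  also have "\<dots> \<le> lam $ i * Mp + (1 - lam $ i) * Mp"
    using lam_pos[of i] lam_lt1[of i] y norm_p_le[of i]
    by (intro add_mono mult_left_mono) auto
  finally show ?thesis by (simp add: algebra_simps)
qed

lemma norm_wm0: "norm (wm u 0) \<le> Mp"
  by (induction u) (auto simp: Mp_nonneg norm_S_le)

definition pref :: "(nat \<Rightarrow> 'i) \<Rightarrow> nat \<Rightarrow> 'i list" where
  "pref a j = map a [0..<j]"

lemma length_pref[simp]: "length (pref a j) = j"
  by (simp add: pref_def)

lemma pref_Suc: "pref a (Suc j) = pref a j @ [a j]"
  by (simp add: pref_def)

lemma pref_add: "pref a (j + m) = pref a j @ pref (\<lambda>n. a (n + j)) m"
proof (induction m)
  case 0 then show ?case by (simp add: pref_def)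
next
  case (Suc m) then show ?case by (simp add: pref_Suc add.commute)
qed

lemma compose_eq: "compose S a j = wm (pref a j)"
proof (induction j)
  case 0 then show ?case by (simp add: pref_def fun_eq_iff)
next
  case (Suc j) then show ?case by (simp add: pref_Suc wm_append fun_eq_iff)
qed

definition ct :: "(nat \<Rightarrow> 'i) \<Rightarrow> nat \<Rightarrow> 'a" where
  "ct a t = sc (pref a t) *\<^sub>R ((1 - lam $ a t) *\<^sub>R p (a t))"

lemma wm_pref_0_sum: "wm (pref a j) 0 = (\<Sum>t<j. ct a t)"
proof (induction j)
  case 0 then show ?case by (simp add: pref_def)
next
  case (Suc j)
  have "wm (pref a (Suc j)) 0 = wm (pref a j) (S (a j) 0)"
    by (simp add: pref_Suc wm_append)
  also have "\<dots> = sc (pref a j) *\<^sub>R S (a j) 0 + wm (pref a j) 0"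
    by (rule wm_affine)
  finally show ?case using Suc by (simp add: ct_def S_def')
qed

lemma norm_ct: "norm (ct a t) \<le> Mp * rr ^ t"
proof -
  have "norm (ct a t) = sc (pref a t) * ((1 - lam $ a t) * norm (p (a t)))"
    using sc_pos[of "pref a t"] lam_lt1[of "a t"] by (simp add: ct_def)
  also have "\<dots> \<le> rr ^ t * (1 * Mp)"
    using sc_le[of "pref a t"] sc_pos[of "pref a t"] lam_pos[of "a t"] lam_lt1[of "a t"] norm_p_le[of "a t"] Mp_nonneg
    by (intro mult_mono) auto
  finally show ?thesis by (simp add: mult.commute)
qed

lemma summable_ct: "summable (ct a)"
proof (rule summable_comparison_test)
  show "\<exists>N. \<forall>n\<ge>N. norm (ct a n) \<le> Mp * rr ^ n" using norm_ct by blast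
  show "summable (\<lambda>n. Mp * rr ^ n)"
    using rr_pos rr_lt1 by (intro summable_mult summable_geometric) auto
qed

lemma compose_tendsto: "(\<lambda>j. compose S a j 0) \<longlonglongrightarrow> coding S a"
proof -
  have "(\<lambda>j. compose S a j 0) = (\<lambda>j. \<Sum>t<j. ct a t)"
    by (simp add: compose_eq wm_pref_0_sum)
  moreover have "(\<lambda>j. \<Sum>t<j. ct a t) \<longlonglongrightarrow> suminf (ct a)"
    using summable_ct summable_LIMSEQ by blast
  ultimately have lim: "(\<lambda>j. compose S a j 0) \<longlonglongrightarrow> suminf (ct a)" by simp
  then have "coding S a = suminf (ct a)"
    unfolding coding_def by (rule limI)
  then show ?thesis using lim by simp
qed

lemma wm_tendsto_wm_pref: "(\<lambda>j. wm (pref a j) 0) \<longlonglongrightarrow> coding S a"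
  using compose_tendsto[of a] by (simp add: compose_eq)

lemma norm_coding: "norm (coding S a) \<le> Mp"
proof (rule Lim_norm_ubound[OF _ wm_tendsto_wm_pref])
  show "\<forall>\<^sub>F j in sequentially. norm (wm (pref a j) 0) \<le> Mp"
    by (simp add: norm_wm0)
qed simp

lemma wm_continuous: "(f \<longlongrightarrow> l) F \<Longrightarrow> ((\<lambda>x. wm u (f x)) \<longlongrightarrow> wm u l) F"
  by (subst (1 2) wm_affine) (intro tendsto_intros)

lemma coding_shift: "coding S a = wm (pref a j) (coding S (\<lambda>n. a (n + j)))"
proof -
  have "(\<lambda>m. wm (pref a (m + j)) 0) \<longlonglongrightarrow> coding S a"
    using LIMSEQ_ignore_initial_segment[OF wm_tendsto_wm_pref[of a], of j] by simp
  moreover have "(\<lambda>m. wm (pref a (m + j)) 0) = (\<lambda>m. wm (pref a j) (wm (pref (\<lambda>n. a (n + j)) m) 0))"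
    by (simp add: add.commute[of _ j] pref_add wm_append)
  moreover have "(\<lambda>m. wm (pref a j) (wm (pref (\<lambda>n. a (n + j)) m) 0)) \<longlonglongrightarrow> wm (pref a j) (coding S (\<lambda>n. a (n + j)))"
    by (rule wm_continuous[OF wm_tendsto_wm_pref])
  ultimately show ?thesis using LIMSEQ_unique by metis
qed

lemma dist_wm_coding: "dist (wm (pref a j) y) (coding S a) \<le> rr ^ j * (norm y + Mp)"
proof -
  have "dist (wm (pref a j) y) (coding S a) = sc (pref a j) * dist y (coding S (\<lambda>n. a (n + j)))"
    by (subst coding_shift[of a j]) (rule dist_wm)
  also have "\<dots> \<le> rr ^ j * (norm y + Mp)"
  proof (rule mult_mono)
    show "sc (pref a j) \<le> rr ^ j" using sc_le[of "pref a j"] by simp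
    show "dist y (coding S (\<lambda>n. a (n + j))) \<le> norm y + Mp"
    proof -
      have "dist y (coding S (\<lambda>n. a (n + j))) \<le> norm y + norm (coding S (\<lambda>n. a (n + j)))"
        by (simp add: dist_norm norm_triangle_ineq4)
      then show ?thesis using norm_coding[of "\<lambda>n. a (n + j)"] by linarith
    qed
  qed (use rr_pos in auto)
  finally show ?thesis .
qed

lemma rr_pow_tendsto: "(\<lambda>j. rr ^ j * C) \<longlonglongrightarrow> 0"
  using rr_pos rr_lt1 by (intro tendsto_mult_left_zero LIMSEQ_power_zero) auto

lemma wm_pref_tendsto_bounded:
  assumes "\<And>j. norm (y j) \<le> B"
  shows "(\<lambda>j. wm (pref a j) (y j)) \<longlonglongrightarrow> coding S a"
proof (rule tendsto_dist_iff[THEN iffD2], rule Lim_null_comparison)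
  show "\<forall>\<^sub>F j in sequentially. norm (dist (wm (pref a j) (y j)) (coding S a)) \<le> rr ^ j * (B + Mp)"
  proof (rule always_eventually, rule allI)
    fix j
    have "dist (wm (pref a j) (y j)) (coding S a) \<le> rr ^ j * (norm (y j) + Mp)" by (rule dist_wm_coding)
    also have "\<dots> \<le> rr ^ j * (B + Mp)" using assms[of j] rr_pos by (intro mult_left_mono) auto
    finally show "norm (dist (wm (pref a j) (y j)) (coding S a)) \<le> rr ^ j * (B + Mp)" by simp
  qed
  show "(\<lambda>j. rr ^ j * (B + Mp)) \<longlonglongrightarrow> 0" by (rule rr_pow_tendsto)
qed

definition cons_seq :: "'i \<Rightarrow> (nat \<Rightarrow> 'i) \<Rightarrow> nat \<Rightarrow> 'i" where
  "cons_seq i b = (\<lambda>n. case n of 0 \<Rightarrow> i | Suc m \<Rightarrow> b m)"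

lemma coding_Suc: "coding S a = S (a 0) (coding S (\<lambda>n. a (Suc n)))"
  using coding_shift[of a 1] by (simp add: pref_def)

lemma coding_cons: "coding S (cons_seq i b) = S i (coding S b)"
  using coding_Suc[of "cons_seq i b"] by (simp add: cons_seq_def)

definition RC :: "'a set" where "RC = range (coding S)"

lemma RC_eq: "RC = (\<Union>i. S i ` RC)"
proof
  show "RC \<subseteq> (\<Union>i. S i ` RC)"
    unfolding RC_def using coding_Suc by blast
  show "(\<Union>i. S i ` RC) \<subseteq> RC"
  proof
    fix x assume "x \<in> (\<Union>i. S i ` RC)"
    then obtain i b where "x = S i (coding S b)" by (auto simp: RC_def)
    then have "x = coding S (cons_seq i b)" by (simp add: coding_cons)
    then show "x \<in> RC" by (simp add: RC_def)
  qed
qed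

lemma S_image_closure: "S i ` closure A = closure (S i ` A)"
proof -
  have eq: "\<And>B. S i ` B = (+) ((1 - lam $ i) *\<^sub>R p i) ` ((*\<^sub>R) (lam $ i) ` B)"
    by (auto simp: S_def' image_iff add.commute)
  show ?thesis unfolding eq closure_translation closure_scaleR ..
qed

lemma unique_attr:
  assumes Y: "compact Y" "Y \<noteq> {}" "Y = (\<Union>i. S i ` Y)"
  shows "Y = RC"
proof
  have Y3: "Y \<subseteq> (\<Union>i. S i ` Y)" using Y(3) by (rule equalityD1)
  have Y3': "S i ` Y \<subseteq> Y" for i using Y(3) by (metis UN_upper UNIV_I equalityD2 order_trans)
  have inv: "wm u y \<in> Y" if "y \<in> Y" for u y
  proof (induction u)
    case Nil then show ?case using that by simp
  next
    case (Cons i u) then show ?case using Y3'[of i] by auto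
  qed
  show "RC \<subseteq> Y"
  proof
    fix x assume "x \<in> RC"
    then obtain a where x: "x = coding S a" unfolding RC_def by auto
    obtain y0 where y0: "y0 \<in> Y" using Y(2) by auto
    have L: "(\<lambda>j. wm (pref a j) y0) \<longlonglongrightarrow> x"
      unfolding x by (rule wm_pref_tendsto_bounded[where B="norm y0"]) simp
    have A: "\<And>j. wm (pref a j) y0 \<in> Y" using inv y0 by simp
    show "x \<in> Y"
      by (rule closed_sequentially[OF compact_imp_closed[OF Y(1)] A L])
  qed
  show "Y \<subseteq> RC"
  proof
    fix y assume y: "y \<in> Y"
    have "\<forall>v\<in>Y. \<exists>q. snd q \<in> Y \<and> v = S (fst q) (snd q)"
    proof
      fix v assume "v \<in> Y"
      have "v \<in> (\<Union>i. S i ` Y)" using Y3 \<open>v \<in> Y\<close> by (rule subsetD)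
      then obtain i y' where "y' \<in> Y" "v = S i y'" by blast
      then show "\<exists>q. snd q \<in> Y \<and> v = S (fst q) (snd q)" by (intro exI[of _ "(i,y')"]) simp
    qed
    then obtain g where g: "\<And>v. v \<in> Y \<Longrightarrow> snd (g v) \<in> Y \<and> v = S (fst (g v)) (snd (g v))"
      by metis
    define ys where "ys = rec_nat y (\<lambda>_ v. snd (g v))"
    have ys0: "ys 0 = y" and ysS: "\<And>n. ys (Suc n) = snd (g (ys n))" by (simp_all add: ys_def)
    define a where "a = (\<lambda>n. fst (g (ys n)))"
    have ysY: "ys n \<in> Y" for n
      by (induction n) (use y g in \<open>auto simp: ys0 ysS\<close>)
    have rep: "y = wm (pref a j) (ys j)" for j
    proof (induction j)
      case 0 then show ?case by (simp add: ys0 pref_def)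
    next
      case (Suc j)
      have "ys j = S (a j) (ys (Suc j))" using g[OF ysY[of j]] by (simp add: a_def ysS)
      then show ?case using Suc by (simp add: pref_Suc wm_append)
    qed
    obtain B where B: "\<And>v. v \<in> Y \<Longrightarrow> norm v \<le> B"
      using compact_imp_bounded[OF Y(1)] bounded_iff by blast
    have "(\<lambda>j. wm (pref a j) (ys j)) \<longlonglongrightarrow> coding S a"
      by (rule wm_pref_tendsto_bounded[where B=B]) (use B ysY in auto)
    moreover have "(\<lambda>j. wm (pref a j) (ys j)) = (\<lambda>j. y)" using rep by (simp add: fun_eq_iff)
    ultimately have "y = coding S a" using LIMSEQ_const_iff by metis
    then show "y \<in> RC" unfolding RC_def by auto
  qed
qed

lemma RC_bounded: "bounded RC"
  unfolding RC_def bounded_iff using norm_coding by blast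

lemma closure_UN_fin: "closure (\<Union>i::'i. A i) = (\<Union>i. closure (A i))"
proof
  show "closure (\<Union>i. A i) \<subseteq> (\<Union>i. closure (A i))"
  proof (rule closure_minimal)
    show "(\<Union>i. A i) \<subseteq> (\<Union>i. closure (A i))" using closure_subset by blast
    show "closed (\<Union>i. closure (A i))" by (intro closed_UN) auto
  qed
  show "(\<Union>i. closure (A i)) \<subseteq> closure (\<Union>i. A i)"
    by (intro UN_least closure_mono) auto
qed

lemma closure_RC_eq: "closure RC = (\<Union>i. S i ` closure RC)"
proof -
  have "closure RC = closure (\<Union>i. S i ` RC)" using RC_eq by simp
  also have "\<dots> = (\<Union>i. closure (S i ` RC))"
    by (rule closure_UN_fin)
  also have "\<dots> = (\<Union>i. S i ` closure RC)" by (simp add: S_image_closure)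
  finally show ?thesis .
qed

lemma RC_nonempty: "RC \<noteq> {}" unfolding RC_def by simp

lemma RC_compact: "compact RC"
proof -
  have "closure RC = RC"
  proof (rule unique_attr)
    show "compact (closure RC)" using RC_bounded by (simp add: compact_closure)
    show "closure RC \<noteq> {}" using RC_nonempty by simp
    show "closure RC = (\<Union>i. S i ` closure RC)" by (rule closure_RC_eq)
  qed
  then show ?thesis using RC_bounded compact_closure by metis
qed

lemma attractor_eq: "attractor S = RC"
  unfolding attractor_def
proof (rule the_equality)
  show "compact RC \<and> RC \<noteq> {} \<and> RC = (\<Union>i. S i ` RC)"
    using RC_compact RC_nonempty RC_eq by blast
  show "\<And>X. compact X \<and> X \<noteq> {} \<and> X = (\<Union>i. S i ` X) \<Longrightarrow> X = RC"
    using unique_attr by blast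
qed

end


lemma bc_Suc: "block_count a b (Suc m) = block_count a b m + (if map a [m..<m+length b] = b then 1 else 0)"
proof -
  have eq: "{j. j < Suc m \<and> map a [j..<j + length b] = b} =
     {j. j < m \<and> map a [j..<j + length b] = b} \<union> (if map a [m..<m+length b] = b then {m} else {})"
    by (auto simp: less_Suc_eq)
  show ?thesis unfolding block_count_def eq by (auto simp: card_insert_if)
qed

lemma bc_le: "block_count a b m \<le> m"
proof -
  have "block_count a b m \<le> card {..<m}"
    unfolding block_count_def by (rule card_mono) auto
  then show ?thesis by simp
qed

lemma bc_add: "block_count a b (j + n) = block_count a b j + card {s. s < n \<and> map a [j+s..<j+s+length b] = b}"
proof (induction n)
  case 0 then show ?case by simp
next
  case (Suc n)
  have eq: "{s. s < Suc n \<and> map a [j+s..<j+s+length b] = b} =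
     {s. s < n \<and> map a [j+s..<j+s+length b] = b} \<union> (if map a [j+n..<j+n+length b] = b then {n} else {})"
    by (auto simp: less_Suc_eq)
  have "card {s. s < Suc n \<and> map a [j+s..<j+s+length b] = b} =
        card {s. s < n \<and> map a [j+s..<j+s+length b] = b} + (if map a [j+n..<j+n+length b] = b then 1 else 0)"
    unfolding eq by (auto simp: card_insert_if)
  then show ?case using Suc by (simp add: bc_Suc)
qed

definition BD :: "nat \<Rightarrow> (nat \<Rightarrow> 'i::finite) \<Rightarrow> bool" where
  "BD k a \<longleftrightarrow> (\<forall>b::'i list. length b = k \<longrightarrow>
      (\<exists>C. \<forall>m. \<bar>real (block_count a b m) - real m / real CARD('i) ^ k\<bar> \<le> C))"

lemma BD_imp_normal:
  assumes "BD k (a :: nat \<Rightarrow> 'i::finite)"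
  shows "simply_normal k a"
  unfolding simply_normal_def
proof (intro allI impI)
  fix b :: "'i list" assume b: "length b = k"
  obtain C where C: "\<And>m. \<bar>real (block_count a b m) - real m / real CARD('i) ^ k\<bar> \<le> C"
    using assms b unfolding BD_def by blast
  let ?c = "1 / real CARD('i) ^ k"
  have "(\<lambda>m. real (block_count a b m) / real m - ?c) \<longlonglongrightarrow> 0"
  proof (rule Lim_null_comparison)
    show "\<forall>\<^sub>F m in sequentially. norm (real (block_count a b m) / real m - ?c) \<le> C * inverse (real m)"
    proof (rule eventually_sequentiallyI[of 1])
      fix m :: nat assume m: "1 \<le> m"
      then have mpos: "real m > 0" by simp
      have "real (block_count a b m) / real m - ?c = (real (block_count a b m) - real m / real CARD('i) ^ k) / real m"
        using mpos by (simp add: field_simps)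
      then have "norm (real (block_count a b m) / real m - ?c) = \<bar>real (block_count a b m) - real m / real CARD('i) ^ k\<bar> / real m"
        using mpos by simp
      also have "\<dots> \<le> C / real m" using C[of m] mpos by (simp add: divide_right_mono)
      finally show "norm (real (block_count a b m) / real m - ?c) \<le> C * inverse (real m)"
        by (simp add: divide_inverse)
    qed
    show "(\<lambda>m. C * inverse (real m)) \<longlonglongrightarrow> 0"
      by (intro tendsto_mult_right_zero lim_inverse_n)
  qed
  then show "(\<lambda>m. real (block_count a b m) / real m) \<longlonglongrightarrow> ?c"
    by (simp add: LIM_zero_iff)
qed

definition pfx :: "'i list \<Rightarrow> (nat \<Rightarrow> 'i) \<Rightarrow> nat \<Rightarrow> 'i" where
  "pfx u a j = (if j < length u then u ! j else a (j - length u))"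

lemma BD_pfx:
  assumes "BD k (a :: nat \<Rightarrow> 'i::finite)"
  shows "BD k (pfx u a)"
  unfolding BD_def
proof (intro allI impI)
  fix b :: "'i list" assume b: "length b = k"
  obtain C where C: "\<And>m. \<bar>real (block_count a b m) - real m / real CARD('i) ^ k\<bar> \<le> C"
    using assms b unfolding BD_def by blast
  let ?l = "length u"
  let ?q = "real CARD('i) ^ k"
  have q1: "?q \<ge> 1" by simp
  have shift: "block_count (pfx u a) b (?l + m) = block_count (pfx u a) b ?l + block_count a b m" for m
  proof -
    have "block_count (pfx u a) b (?l + m) = block_count (pfx u a) b ?l +
        card {s. s < m \<and> map (pfx u a) [?l+s..<?l+s+length b] = b}" by (rule bc_add)
    moreover have "map (pfx u a) [?l+s..<?l+s+length b] = map a [s..<s+length b]" for s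
      by (rule nth_equalityI) (auto simp: pfx_def)
    ultimately show ?thesis by (simp add: block_count_def)
  qed
  have "\<bar>real (block_count (pfx u a) b m) - real m / ?q\<bar> \<le> C + 3 * real ?l" for m
  proof (cases "m < ?l")
    case True
    have x1: "real (block_count (pfx u a) b m) \<le> real ?l" using bc_le[of "pfx u a" b m] True by simp
    have "real m / ?q \<le> real m / 1" by (rule divide_left_mono) (use q1 in auto)
    then have x2: "real m / ?q \<le> real ?l" using True by simp
    have x3: "0 \<le> real m / ?q" by simp
    have x4: "0 \<le> C" using C[of 0] by simp
    show ?thesis unfolding abs_le_iff using x1 x2 x3 x4 of_nat_0_le_iff[of "block_count (pfx u a) b m"] by (intro conjI) linarith+
  next
    case False
    then obtain m' where m: "m = ?l + m'" by (metis le_add_diff_inverse not_less)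
    have c0: "real (block_count (pfx u a) b ?l) \<le> real ?l" using bc_le by simp
    have e1: "real (block_count (pfx u a) b m) = real (block_count (pfx u a) b ?l) + real (block_count a b m')"
      using shift[of m'] m by simp
    have e2: "real m / ?q = real m' / ?q + real ?l / ?q" using m by (simp add: add_divide_distrib)
    have "real ?l / ?q \<le> real ?l / 1" by (rule divide_left_mono) (use q1 in auto)
    then have e3: "real ?l / ?q \<le> real ?l" by simp
    have e4: "0 \<le> real ?l / ?q" by simp
    have e5: "- C \<le> real (block_count a b m') - real m' / ?q" "real (block_count a b m') - real m' / ?q \<le> C"
      using C[of m'] unfolding abs_le_iff by auto
    show ?thesis unfolding abs_le_iff using c0 e1 e2 e3 e4 e5 of_nat_0_le_iff[of "block_count (pfx u a) b ?l"] by (intro conjI) linarith+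
  qed
  then show "\<exists>C. \<forall>m. \<bar>real (block_count (pfx u a) b m) - real m / real CARD('i) ^ k\<bar> \<le> C" by blast
qed


definition dgt :: "nat \<Rightarrow> nat \<Rightarrow> nat \<Rightarrow> nat" where
  "dgt B v e = (v div B ^ e) mod B"

lemma dgt_mod: "(\<And>e. e < m \<Longrightarrow> dgt B v e = dgt B v' e) \<Longrightarrow> v mod B ^ m = v' mod B ^ m"
proof (induction m)
  case 0 then show ?case by simp
next
  case (Suc m)
  have "v mod B ^ Suc m = B ^ m * dgt B v m + v mod B ^ m"
    unfolding power_Suc2 dgt_def by (rule mod_mult2_eq)
  moreover have "v' mod B ^ Suc m = B ^ m * dgt B v' m + v' mod B ^ m"
    unfolding power_Suc2 dgt_def by (rule mod_mult2_eq)
  ultimately show ?case using Suc by simp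
qed

lemma dgt_div: "dgt B (v div B ^ n) e = dgt B v (n + e)"
  by (simp add: dgt_def div_mult2_eq power_add)

locale wrd =
  fixes e :: "nat \<Rightarrow> 'i::finite" and k :: nat and B :: nat
  assumes B_eq: "B = CARD('i)" and ebij: "bij_betw e {..<B} UNIV" and k1: "1 \<le> k" and B2: "2 \<le> B"
begin

definition N where "N = B ^ k"
definition L where "L = k * N"

definition dig :: "nat \<Rightarrow> nat \<Rightarrow> nat" where "dig i t = dgt B i (k - 1 - t)"
definition W :: "nat \<Rightarrow> 'i" where "W s = e (dig (s div k) (s mod k))"
definition Wl :: "'i list" where "Wl = map W [0..<L]"
definition Rx :: "nat \<Rightarrow> 'i list" where "Rx x = rotate (k * x) Wl"
definition cw :: "nat \<Rightarrow> 'i list" where "cw s = map (\<lambda>q. W ((s + q) mod L)) [0..<k]"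
definition seqc :: "(nat \<Rightarrow> nat) \<Rightarrow> nat \<Rightarrow> 'i" where
  "seqc xs j = W ((k * xs (j div L) + j mod L) mod L)"

lemma B_pos: "0 < B" using B2 by simp
lemma B_le_N: "B \<le> N"
  unfolding N_def using power_increasing[of 1 k B] k1 B2 by simp
lemma N_pos: "0 < N" using B_le_N B_pos by linarith
lemma k_lt_L: "k < L"
proof -
  have "2 \<le> N" using B_le_N B2 by simp
  then have "k * 2 \<le> k * N" by simp
  then show ?thesis unfolding L_def using k1 by simp
qed
lemma L_pos: "0 < L" using k_lt_L by simp
lemma length_Wl[simp]: "length Wl = L" by (simp add: Wl_def)
lemma length_Rx[simp]: "length (Rx x) = L" by (simp add: Rx_def)

lemma e_inj: "x < B \<Longrightarrow> y < B \<Longrightarrow> e x = e y \<Longrightarrow> x = y"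
  using ebij unfolding bij_betw_def inj_on_def by blast

lemma e_surj: "\<exists>x<B. c = e x"
proof -
  have "c \<in> e ` {..<B}" using ebij by (simp add: bij_betw_def)
  then show ?thesis by auto
qed

lemma dig_lt: "dig i t < B" unfolding dig_def dgt_def using B_pos by simp

lemma W_blk: "t < k \<Longrightarrow> W (k * i + t) = e (dig i t)"
  unfolding W_def by simp

lemma dig_small: assumes "x < B" "t < k - 1" shows "dig x t = 0"
proof -
  have "B ^ 1 \<le> B ^ (k - 1 - t)" using assms B_pos by (intro power_increasing) auto
  then have "x < B ^ (k - 1 - t)" using assms by simp
  then show ?thesis unfolding dig_def dgt_def by simp
qed

lemma dig_last: assumes "x < B" shows "dig x (k - 1) = x"
  using assms unfolding dig_def dgt_def by simp

lemma W_small: assumes "x < B" "t < k - 1" shows "W (k * x + t) = e 0"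
  using W_blk[of t x] dig_small[OF assms] assms by simp

lemma W_last: assumes "x < B" shows "W (k * x + (k - 1)) = e x"
  using W_blk[of "k - 1" x] dig_last[OF assms] k1 by simp

lemma kx_bound: "x < B \<Longrightarrow> t < k \<Longrightarrow> k * x + t < L"
proof -
  assume x: "x < B" and t: "t < k"
  have "k * x + t < k * (x + 1)" using t by simp
  also have "\<dots> \<le> k * B" using x by (intro mult_le_mono2) simp
  also have "\<dots> \<le> L" unfolding L_def using B_le_N by simp
  finally show ?thesis .
qed

lemma cw_nth:
  assumes i: "i < N" and t: "t < k" and q: "q < k"
  shows "cw (k * i + t) ! q = (if t + q < k then e (dig i (t + q)) else e (dig ((i + 1) mod N) (t + q - k)))"
proof (cases "t + q < k")
  case True
  have "k * i + t + q < k * (i + 1)" using True by simp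
  also have "\<dots> \<le> L" unfolding L_def using i by (intro mult_le_mono2) simp
  finally have lt: "k * i + t + q < L" .
  have "cw (k * i + t) ! q = W (k * i + (t + q))" unfolding cw_def using q lt by (simp add: add.assoc)
  then show ?thesis using W_blk[OF True] True by simp
next
  case False
  define u where "u = t + q - k"
  have u: "u < k" "t + q = k + u" using False t q by (simp_all add: u_def)
  have eq: "k * i + t + q = k * (i + 1) + u" using u by simp
  show ?thesis
  proof (cases "i + 1 < N")
    case True
    have "k * (i + 1) + u < k * (i + 2)" using u by simp
    also have "\<dots> \<le> L" unfolding L_def using True by (intro mult_le_mono2) simp
    finally have lt: "k * (i + 1) + u < L" .
    have "cw (k * i + t) ! q = W ((k * i + t + q) mod L)" unfolding cw_def using q by simp
    also have "(k * i + t + q) mod L = k * (i + 1) + u" using lt eq by simp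
    finally have "cw (k * i + t) ! q = W (k * (i + 1) + u)" .
    also have "\<dots> = e (dig (i + 1) u)" by (rule W_blk[OF u(1)])
    finally have calc: "cw (k * i + t) ! q = e (dig (i + 1) u)" .
    have r1: "(i + 1) mod N = i + 1" using True by simp
    have r2: "t + q - k = u" by (simp add: u_def)
    show ?thesis using calc by (simp only: False if_False r1 r2)
  next
    case False2: False
    then have iN: "i + 1 = N" using i by simp
    have "k * i + t + q = L + u" by (simp only: L_def iN[symmetric] eq)
    then have "(k * i + t + q) mod L = u" using u(1) k_lt_L by simp
    then have "cw (k * i + t) ! q = W u" unfolding cw_def using q by (simp add: add.assoc)
    moreover have "W u = e (dig 0 u)" using W_blk[OF u(1), of 0] by simp
    ultimately show ?thesis using False iN by (simp add: u_def)
  qed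
qed

lemma length_cw[simp]: "length (cw s) = k" by (simp add: cw_def)

lemma s_decomp: "s < L \<Longrightarrow> s = k * (s div k) + s mod k \<and> s div k < N \<and> s mod k < k"
proof -
  assume s: "s < L"
  have "s div k < N" using s k1 unfolding L_def by (simp add: div_less_iff_less_mult mult.commute)
  then show ?thesis using k1 by simp
qed

lemma cw_inj:
  assumes s: "s < L" and s': "s' < L" and tt: "s mod k = s' mod k" and c: "cw s = cw s'"
  shows "s = s'"
proof -
  define i where "i = s div k"
  define i' where "i' = s' div k"
  define t where "t = s mod k"
  have si: "s = k * i + t" "i < N" "t < k" using s_decomp[OF s] by (simp_all add: i_def t_def)
  have si': "s' = k * i' + t" "i' < N" using s_decomp[OF s'] tt by (simp_all add: i'_def t_def)
  have nth: "cw (k * i + t) ! q = cw (k * i' + t) ! q" for q using c si si' by simp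
  have low: "dig i (t + q) = dig i' (t + q)" if "t + q < k" for q
  proof -
    have "e (dig i (t + q)) = e (dig i' (t + q))"
      using nth[of q] cw_nth[OF si(2) si(3), of q] cw_nth[OF si'(2) si(3), of q] that by simp
    then show ?thesis using e_inj dig_lt by blast
  qed
  have high: "dig ((i + 1) mod N) u = dig ((i' + 1) mod N) u" if "u < t" for u
  proof -
    define q where "q = u + k - t"
    have q: "q < k" "\<not> t + q < k" "t + q - k = u" using that si(3) by (simp_all add: q_def)
    have "e (dig ((i + 1) mod N) u) = e (dig ((i' + 1) mod N) u)"
      using nth[of q] cw_nth[OF si(2) si(3) q(1)] cw_nth[OF si'(2) si(3) q(1)] q by simp
    then show ?thesis using e_inj dig_lt by blast
  qed
  have m1: "i mod B ^ (k - t) = i' mod B ^ (k - t)"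
  proof (rule dgt_mod)
    fix f assume f: "f < k - t"
    have "t + (k - 1 - t - f) < k" using f by simp
    then have "dig i (t + (k - 1 - t - f)) = dig i' (t + (k - 1 - t - f))" by (rule low)
    moreover have eqf: "k - 1 - (t + (k - 1 - t - f)) = f" using f by simp
    ultimately have "dgt B i (k - 1 - (t + (k - 1 - t - f))) = dgt B i' (k - 1 - (t + (k - 1 - t - f)))"
      unfolding dig_def by simp
    then show "dgt B i f = dgt B i' f" by (simp only: eqf)
  qed
  define v where "v = (i + 1) mod N"
  define v' where "v' = (i' + 1) mod N"
  have vN: "v < N" "v' < N" using N_pos by (simp_all add: v_def v'_def)
  have m2: "v div B ^ (k - t) mod B ^ t = v' div B ^ (k - t) mod B ^ t"
  proof (rule dgt_mod)
    fix f assume f: "f < t"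
    have "dig v (t - 1 - f) = dig v' (t - 1 - f)" using high[of "t - 1 - f"] f by (simp add: v_def v'_def)
    moreover have "k - 1 - (t - 1 - f) = k - t + f" using f si(3) by simp
    ultimately show "dgt B (v div B ^ (k - t)) f = dgt B (v' div B ^ (k - t)) f"
      unfolding dig_def dgt_div by simp
  qed
  have "v div B ^ (k - t) < B ^ t"
  proof -
    have "v < B ^ (k - t) * B ^ t" using vN si(3) by (simp add: N_def power_add[symmetric])
    then show ?thesis by (simp add: div_less_iff_less_mult mult.commute B_pos)
  qed
  moreover have "v' div B ^ (k - t) < B ^ t"
  proof -
    have "v' < B ^ (k - t) * B ^ t" using vN si(3) by (simp add: N_def power_add[symmetric])
    then show ?thesis by (simp add: div_less_iff_less_mult mult.commute B_pos)
  qed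
  ultimately have d: "v div B ^ (k - t) = v' div B ^ (k - t)" using m2 by simp
  have dvdN: "B ^ (k - t) dvd N" unfolding N_def by (simp add: le_imp_power_dvd)
  have "v mod B ^ (k - t) = (i + 1) mod B ^ (k - t)" unfolding v_def using dvdN by (simp add: mod_mod_cancel)
  also have "\<dots> = (i mod B ^ (k - t) + 1) mod B ^ (k - t)" by (simp add: mod_simps)
  also have "\<dots> = (i' mod B ^ (k - t) + 1) mod B ^ (k - t)" using m1 by simp
  also have "\<dots> = (i' + 1) mod B ^ (k - t)" by (simp add: mod_simps)
  also have "\<dots> = v' mod B ^ (k - t)" unfolding v'_def using dvdN by (simp add: mod_mod_cancel)
  finally have "v mod B ^ (k - t) = v' mod B ^ (k - t)" .
  note mm = this
  have "v = v div B ^ (k - t) * B ^ (k - t) + v mod B ^ (k - t)" by (rule div_mult_mod_eq[symmetric])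
  also have "\<dots> = v' div B ^ (k - t) * B ^ (k - t) + v' mod B ^ (k - t)" using d mm by simp
  also have "\<dots> = v'" by (rule div_mult_mod_eq)
  finally have "v = v'" .
  then have "(i + 1) mod N = (i' + 1) mod N" by (simp add: v_def v'_def)
  then have "i = i'" using si(2) si'(2)
  proof -
    have f: "(j + 1) mod N = (if j + 1 = N then 0 else j + 1)" if "j < N" for j
      using that by (cases "j + 1 = N") auto
    show ?thesis using \<open>(i + 1) mod N = (i' + 1) mod N\<close> f[OF si(2)] f[OF si'(2)] by (auto split: if_splits)
  qed
  then show ?thesis using si si' by simp
qed

definition Lk :: "'i list set" where "Lk = {b. set b \<subseteq> UNIV \<and> length b = k}"

lemma card_Lk: "card Lk = N"
  unfolding Lk_def N_def using card_lists_length_eq[of "UNIV :: 'i set" k] B_eq by simp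

lemma finite_Lk: "finite Lk"
  unfolding Lk_def using finite_lists_length_eq[of "UNIV :: 'i set" k] by simp

lemma count_cw:
  assumes b: "length b = k"
  shows "card {s. s < L \<and> cw s = b} = k"
proof -
  define \<phi> where "\<phi> s = (s mod k, cw s)" for s
  have inj: "inj_on \<phi> {..<L}"
    by (rule inj_onI) (use cw_inj in \<open>auto simp: \<phi>_def\<close>)
  have sub: "\<phi> ` {..<L} \<subseteq> {..<k} \<times> Lk"
    using k1 by (auto simp: \<phi>_def Lk_def)
  have "card (\<phi> ` {..<L}) = card ({..<k} \<times> Lk)"
    using card_image[OF inj] card_Lk by (simp add: card_cartesian_product L_def)
  then have img: "\<phi> ` {..<L} = {..<k} \<times> Lk"
    using sub by (intro card_subset_eq) (auto simp: finite_Lk)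
  have bLk: "b \<in> Lk" using b by (simp add: Lk_def)
  have "\<phi> ` {s. s < L \<and> cw s = b} = {..<k} \<times> {b}"
  proof
    show "\<phi> ` {s. s < L \<and> cw s = b} \<subseteq> {..<k} \<times> {b}" using k1 by (auto simp: \<phi>_def)
    show "{..<k} \<times> {b} \<subseteq> \<phi> ` {s. s < L \<and> cw s = b}"
    proof
      fix z assume z: "z \<in> {..<k} \<times> {b}"
      then have "z \<in> \<phi> ` {..<L}" using img bLk by auto
      then obtain s where "s < L" "z = \<phi> s" by auto
      then show "z \<in> \<phi> ` {s. s < L \<and> cw s = b}" using z by (auto simp: \<phi>_def)
    qed
  qed
  moreover have "inj_on \<phi> {s. s < L \<and> cw s = b}" using inj by (rule inj_on_subset) auto
  ultimately have "card {s. s < L \<and> cw s = b} = card ({..<k} \<times> {b})"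
    using card_image[of \<phi> "{s. s < L \<and> cw s = b}"] by simp
  then show ?thesis by (simp add: card_cartesian_product)
qed

lemma cw_0: "s < L \<Longrightarrow> cw s ! 0 = W s"
  using k1 by (simp add: cw_def)

lemma count_letter: "card {s. s < L \<and> W s = c} = k * B ^ (k - 1)"
proof -
  define Lc where "Lc = {b \<in> Lk. b ! 0 = c}"
  have eq: "{s. s < L \<and> W s = c} = (\<Union>b\<in>Lc. {s. s < L \<and> cw s = b})"
  proof
    show "{s. s < L \<and> W s = c} \<subseteq> (\<Union>b\<in>Lc. {s. s < L \<and> cw s = b})"
      using cw_0 by (auto simp: Lc_def Lk_def)
    show "(\<Union>b\<in>Lc. {s. s < L \<and> cw s = b}) \<subseteq> {s. s < L \<and> W s = c}"
      using cw_0 by (auto simp: Lc_def)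
  qed
  have finLc: "finite Lc" using finite_Lk by (simp add: Lc_def)
  have "card {s. s < L \<and> W s = c} = (\<Sum>b\<in>Lc. card {s. s < L \<and> cw s = b})"
    unfolding eq by (rule card_UN_disjoint) (auto simp: finLc)
  also have "\<dots> = (\<Sum>b\<in>Lc. k)" by (rule sum.cong) (auto simp: Lc_def Lk_def count_cw)
  also have "\<dots> = k * card Lc" by simp
  also have "card Lc = B ^ (k - 1)"
  proof -
    obtain k' where k': "k = Suc k'" using k1 by (cases k) auto
    have "Lc = (\<lambda>b'. c # b') ` {b'. set b' \<subseteq> UNIV \<and> length b' = k'}"
    proof
      show "Lc \<subseteq> (\<lambda>b'. c # b') ` {b'. set b' \<subseteq> UNIV \<and> length b' = k'}"
      proof
        fix b assume "b \<in> Lc"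
        then have "length b = k" "b ! 0 = c" by (auto simp: Lc_def Lk_def)
        then have "length b = Suc k'" "b ! 0 = c" using k' by simp_all
        then show "b \<in> (\<lambda>b'. c # b') ` {b'. set b' \<subseteq> UNIV \<and> length b' = k'}"
          by (cases b) auto
      qed
      show "(\<lambda>b'. c # b') ` {b'. set b' \<subseteq> UNIV \<and> length b' = k'} \<subseteq> Lc"
      proof (rule image_subsetI)
        fix b' assume "b' \<in> {b'. set b' \<subseteq> (UNIV :: 'i set) \<and> length b' = k'}"
        then have "length (c # b') = k" using k' by simp
        then show "c # b' \<in> Lc" by (simp add: Lc_def Lk_def)
      qed
    qed
    then have "card Lc = card {b'. set b' \<subseteq> (UNIV :: 'i set) \<and> length b' = k'}"
      by (simp add: card_image inj_on_def)
    then show ?thesis using card_lists_length_eq[of "UNIV :: 'i set" k'] k' B_eq by simp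
  qed
  finally show ?thesis by simp
qed

lemma prod_Wl: "(\<Prod>s<L. f (W s)) = (\<Prod>c\<in>UNIV. f c ^ (k * B ^ (k - 1)))"
proof -
  have "(\<Prod>s<L. f (W s)) = (\<Prod>c\<in>UNIV. \<Prod>s\<in>{x. x \<in> {..<L} \<and> W x = c}. f (W s))"
    by (rule prod.group[symmetric]) auto
  also have "\<dots> = (\<Prod>c\<in>UNIV. f c ^ card {s. s < L \<and> W s = c})"
    by (rule prod.cong) auto
  finally show ?thesis by (simp add: count_letter)
qed

lemma seqc_win:
  assumes xs: "\<And>m. xs m < B"
  shows "map (seqc xs) [j..<j + k] = cw ((k * xs (j div L) + j mod L) mod L)"
proof (rule nth_equalityI)
  show "length (map (seqc xs) [j..<j + k]) = length (cw ((k * xs (j div L) + j mod L) mod L))" by simp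
  fix q assume "q < length (map (seqc xs) [j..<j + k])"
  then have q: "q < k" by simp
  define x where "x = xs (j div L)"
  have x: "x < B" using xs by (simp add: x_def)
  have jm: "j mod L < L" using L_pos by simp
  have "cw ((k * x + j mod L) mod L) ! q = W (((k * x + j mod L) mod L + q) mod L)"
    using q by (simp add: cw_def)
  also have "((k * x + j mod L) mod L + q) mod L = (k * x + j mod L + q) mod L"
    by (rule mod_add_left_eq)
  finally have rhs: "cw ((k * x + j mod L) mod L) ! q = W ((k * x + j mod L + q) mod L)" .
  show "map (seqc xs) [j..<j + k] ! q = cw ((k * xs (j div L) + j mod L) mod L) ! q"
  proof (cases "j mod L + q < L")
    case True
    have "(j + q) div L = j div L" "(j + q) mod L = j mod L + q"
    proof -
      have jq: "j + q = (j div L) * L + (j mod L + q)" using div_mult_mod_eq[of j L] by linarith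
      show "(j + q) div L = j div L" by (subst jq) (use True L_pos in simp)
      show "(j + q) mod L = j mod L + q" by (subst jq) (use True L_pos in simp)
    qed
    then show ?thesis using q rhs by (simp add: seqc_def x_def add.assoc)
  next
    case False
    define t where "t = j mod L + q - L"
    have t: "t < k - 1" using False jm q unfolding t_def by linarith
    have jq: "j + q = (j div L + 1) * L + t"
    proof -
      have "j mod L + q = L + t" using False unfolding t_def by simp
      moreover have "(j div L + 1) * L = j div L * L + L" by simp
      moreover have "j = j div L * L + j mod L" by (rule div_mult_mod_eq[symmetric])
      ultimately show ?thesis by linarith
    qed
    have "(j + q) div L = j div L + 1" "(j + q) mod L = t"
    proof -
      have tL: "t < L" using t k_lt_L by simp
      show "(j + q) div L = j div L + 1"
      proof -
        have "(j + q) div L = (t + (j div L + 1) * L) div L" unfolding jq by (simp only: add.commute)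
        also have "\<dots> = (j div L + 1) + t div L" using L_pos by (intro div_mult_self1) simp
        finally show ?thesis using tL by simp
      qed
      show "(j + q) mod L = t"
      proof -
        have "(j + q) mod L = (t + (j div L + 1) * L) mod L" unfolding jq by (simp only: add.commute)
        also have "\<dots> = t mod L" by (rule mod_mult_self1)
        finally show ?thesis using tL by simp
      qed
    qed
    moreover define x' where "x' = xs (j div L + 1)"
    have x': "x' < B" using xs by (simp add: x'_def)
    have "t < k" using t by simp
    have l1: "seqc xs (j + q) = W (k * x' + t)"
      using calculation kx_bound[OF x' \<open>t < k\<close>] by (simp add: seqc_def x'_def)
    have "(k * x + j mod L + q) mod L = (k * x + t) mod L"
    proof -
      have "k * x + j mod L + q = (k * x + t) + 1 * L" using False unfolding t_def by simp
      then show ?thesis by (simp only: mod_mult_self1)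
    qed
    then have l2: "cw ((k * x + j mod L) mod L) ! q = W (k * x + t)"
      using rhs kx_bound[OF x \<open>t < k\<close>] by simp
    show ?thesis using l1 l2 W_small[OF x t] W_small[OF x' t] q by (simp add: x_def)
  qed
qed

lemma card_rot:
  assumes c: "c < L"
  shows "card {s. s < L \<and> P ((c + s) mod L)} = card {s. s < L \<and> P s}"
proof -
  have bij: "bij_betw (\<lambda>s. (c + s) mod L) {s. s < L \<and> P ((c + s) mod L)} {s. s < L \<and> P s}"
  proof (rule bij_betw_byWitness[where f' = "\<lambda>s. (s + (L - c)) mod L"])
    show "\<forall>s\<in>{s. s < L \<and> P ((c + s) mod L)}. (((c + s) mod L) + (L - c)) mod L = s"
    proof clarify
      fix s assume "s < L"
      have "((c + s) mod L + (L - c)) mod L = (c + s + (L - c)) mod L" by (simp add: mod_simps)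
      also have "c + s + (L - c) = s + L" using c by simp
      finally show "((c + s) mod L + (L - c)) mod L = s" using \<open>s < L\<close> by simp
    qed
    show "\<forall>s\<in>{s. s < L \<and> P s}. (c + (s + (L - c)) mod L) mod L = s"
    proof clarify
      fix s assume "s < L"
      have "(c + (s + (L - c)) mod L) mod L = (c + (s + (L - c))) mod L" by (simp add: mod_simps)
      also have "c + (s + (L - c)) = s + L" using c by simp
      finally show "(c + (s + (L - c)) mod L) mod L = s" using \<open>s < L\<close> by simp
    qed
    show "(\<lambda>s. (c + s) mod L) ` {s. s < L \<and> P ((c + s) mod L)} \<subseteq> {s. s < L \<and> P s}"
      using L_pos by auto
    show "(\<lambda>s. (s + (L - c)) mod L) ` {s. s < L \<and> P s} \<subseteq> {s. s < L \<and> P ((c + s) mod L)}"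
    proof clarify
      fix s assume s: "s < L" "P s"
      have "(c + (s + (L - c)) mod L) mod L = (c + (s + (L - c))) mod L" by (simp add: mod_simps)
      also have "c + (s + (L - c)) = s + L" using c by simp
      finally show "(s + (L - c)) mod L < L \<and> P ((c + (s + (L - c)) mod L) mod L)" using s L_pos by simp
    qed
  qed
  then show ?thesis by (rule bij_betw_same_card)
qed

lemma bc_seqc:
  assumes xs: "\<And>m. xs m < B" and b: "length b = k"
  shows "block_count (seqc xs) b (m * L) = m * k"
proof (induction m)
  case 0 then show ?case by (simp add: block_count_def)
next
  case (Suc m)
  have "block_count (seqc xs) b (m * L + L) = block_count (seqc xs) b (m * L) +
      card {s. s < L \<and> map (seqc xs) [m * L + s..<m * L + s + length b] = b}" by (rule bc_add)
  also have "{s. s < L \<and> map (seqc xs) [m * L + s..<m * L + s + length b] = b} =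
      {s. s < L \<and> cw ((k * xs m + s) mod L) = b}"
  proof -
    have "map (seqc xs) [m * L + s..<m * L + s + length b] = cw ((k * xs m + s) mod L)" if "s < L" for s
    proof -
      have "(m * L + s) div L = m" "(m * L + s) mod L = s" using that by simp_all
      then show ?thesis using seqc_win[OF xs, where j = "m * L + s"] b by simp
    qed
    then show ?thesis by auto
  qed
  also have "card {s. s < L \<and> cw ((k * xs m + s) mod L) = b} = card {s. s < L \<and> cw s = b}"
    using card_rot[of "k * xs m" "\<lambda>s. cw s = b"] kx_bound[OF xs[of m], of 0] k1 by simp
  also have "\<dots> = k" using count_cw[OF b] .
  finally show ?case using Suc by (simp add: add.commute)
qed

lemma BD_seqc:
  assumes xs: "\<And>m. xs m < B"
  shows "BD k (seqc xs)"
  unfolding BD_def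
proof (intro allI impI)
  fix b :: "'i list" assume b: "length b = k"
  have "\<bar>real (block_count (seqc xs) b m) - real m / real B ^ k\<bar> \<le> real L + real k" for m
  proof -
    define q where "q = m div L"
    define r where "r = m mod L"
    have m: "m = q * L + r" "r < L" using L_pos div_mult_mod_eq[of m L] by (simp_all add: q_def r_def)
    have bq: "block_count (seqc xs) b (q * L) = q * k" by (rule bc_seqc[OF xs b])
    have "block_count (seqc xs) b (q * L + r) = block_count (seqc xs) b (q * L) +
        card {s. s < r \<and> map (seqc xs) [q * L + s..<q * L + s + length b] = b}" by (rule bc_add)
    moreover have "card {s. s < r \<and> map (seqc xs) [q * L + s..<q * L + s + length b] = b} \<le> r"
      by (rule order_trans[OF card_mono[of "{..<r}"]]) auto
    ultimately have c1: "q * k \<le> block_count (seqc xs) b m" "block_count (seqc xs) b m \<le> q * k + r"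
      using bq m by auto
    have BkN: "real B ^ k = real N" by (simp add: N_def)
    have "real m / real B ^ k = real m * real k / real L"
      using k1 N_pos by (simp add: BkN L_def)
    also have "\<dots> = real q * real k + real r * real k / real L"
      using m L_pos by (simp add: field_simps)
    finally have c2: "real m / real B ^ k = real q * real k + real r * real k / real L" .
    have "real r * real k / real L \<le> real L * real k / real L"
      by (intro divide_right_mono mult_right_mono) (use m(2) in auto)
    then have c3: "real r * real k / real L \<le> real k" using L_pos by simp
    have c4: "0 \<le> real r * real k / real L" by simp
    have c5: "real r \<le> real L" using m(2) by simp
    have c1': "real q * real k \<le> real (block_count (seqc xs) b m)"
      "real (block_count (seqc xs) b m) \<le> real q * real k + real r"
      using c1 by (simp_all flip: of_nat_mult of_nat_add)
    show ?thesis unfolding abs_le_iff using c1' c2 c3 c4 c5 by (intro conjI) linarith+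
  qed
  then show "\<exists>C. \<forall>m. \<bar>real (block_count (seqc xs) b m) - real m / real CARD('i) ^ k\<bar> \<le> C"
    using B_eq by auto
qed

end


lemma prod_list_upt: "prod_list (map f [0..<n]) = (\<Prod>s<n. f s)"
  by (induction n) (auto simp: lessThan_Suc mult.commute)

locale main = hifs lam p + wrd e k B
  for lam :: "real^'i::finite" and p :: "'i \<Rightarrow> 'a::euclidean_space" and e :: "nat \<Rightarrow> 'i" and k B +
  assumes aff: "affine hull (range p) = UNIV"
    and rho: "real DIM('a) / (real DIM('a) + 1) \<le> sc Wl"
begin

definition fp :: "'i list \<Rightarrow> 'a" where "fp u = (1 / (1 - sc u)) *\<^sub>R wm u 0"

lemma sc_lt1: "u \<noteq> [] \<Longrightarrow> sc u < 1"
proof (cases u)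
  case (Cons i v)
  have "lam $ i * sc v \<le> lam $ i" using sc_le1[of v] lam_pos[of i] by (simp add: mult_left_le)
  then show ?thesis using Cons lam_lt1[of i] by simp
qed simp

lemma fp_fixed: assumes "u \<noteq> []" shows "wm u (fp u) = fp u"
proof -
  have s: "sc u < 1" using sc_lt1[OF assms] .
  have "wm u (fp u) = sc u *\<^sub>R fp u + wm u 0" by (rule wm_affine)
  also have "\<dots> = (sc u * (1 / (1 - sc u))) *\<^sub>R wm u 0 + 1 *\<^sub>R wm u 0" unfolding fp_def by simp
  also have "\<dots> = (sc u * (1 / (1 - sc u)) + 1) *\<^sub>R wm u 0" by (rule scaleR_add_left[symmetric])
  also have "sc u * (1 / (1 - sc u)) + 1 = 1 / (1 - sc u)" using s by (simp add: field_simps)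
  also have "(1 / (1 - sc u)) *\<^sub>R wm u 0 = fp u" unfolding fp_def ..
  finally show ?thesis .
qed

lemma fp_unique: assumes "u \<noteq> []" "wm u y = y" shows "y = fp u"
proof -
  have s: "sc u < 1" using sc_lt1[OF assms(1)] .
  have "dist (wm u y) (wm u (fp u)) = sc u * dist y (fp u)" by (rule dist_wm)
  then have "dist y (fp u) = sc u * dist y (fp u)" using assms fp_fixed by simp
  then have "(1 - sc u) * dist y (fp u) = 0" by (simp add: algebra_simps)
  then show ?thesis using s by simp
qed

lemma fp_rot: assumes "X @ Y \<noteq> []" shows "fp (X @ Y) = wm X (fp (Y @ X))"
proof -
  have YX: "Y @ X \<noteq> []" using assms by auto
  have "wm (X @ Y) (wm X (fp (Y @ X))) = wm X (wm (Y @ X) (fp (Y @ X)))" by (simp add: wm_append)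
  also have "\<dots> = wm X (fp (Y @ X))" using fp_fixed[OF YX] by simp
  finally have "wm (X @ Y) (wm X (fp (Y @ X))) = wm X (fp (Y @ X))" .
  from fp_unique[OF assms this] show ?thesis by simp
qed

lemma wm_fp: "u \<noteq> [] \<Longrightarrow> wm u y = sc u *\<^sub>R y + (1 - sc u) *\<^sub>R fp u"
  using sc_lt1[of u] by (subst wm_affine) (simp add: fp_def)

fun wt :: "'i list \<Rightarrow> 'i \<Rightarrow> real" where
  "wt [] c = 0"
| "wt (i # u) c = lam $ i * wt u c + (if c = i then 1 - lam $ i else 0)"

lemma wm_wt: "wm u y = sc u *\<^sub>R y + (\<Sum>c\<in>UNIV. wt u c *\<^sub>R p c)"
proof (induction u)
  case Nil then show ?case by simp
next
  case (Cons i u)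
  have "wm (i # u) y = lam $ i *\<^sub>R (sc u *\<^sub>R y + (\<Sum>c\<in>UNIV. wt u c *\<^sub>R p c)) + (1 - lam $ i) *\<^sub>R p i"
    using Cons by (simp add: S_def')
  also have "\<dots> = (lam $ i * sc u) *\<^sub>R y + ((\<Sum>c\<in>UNIV. (lam $ i * wt u c) *\<^sub>R p c) + (1 - lam $ i) *\<^sub>R p i)"
    by (simp add: scaleR_sum_right algebra_simps)
  also have "(\<Sum>c\<in>UNIV. (lam $ i * wt u c) *\<^sub>R p c) + (1 - lam $ i) *\<^sub>R p i = (\<Sum>c\<in>UNIV. wt (i # u) c *\<^sub>R p c)"
    by (simp add: scaleR_add_left sum.distrib if_distrib[of "\<lambda>x. x *\<^sub>R _"] cong: if_cong)
  finally show ?case by simp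
qed

lemma sum_wt: "sc u + (\<Sum>c\<in>UNIV. wt u c) = 1"
proof (induction u)
  case Nil then show ?case by simp
next
  case (Cons i u)
  have "(\<Sum>c\<in>UNIV. wt (i # u) c) = (\<Sum>c\<in>UNIV. lam $ i * wt u c) + (\<Sum>c\<in>UNIV. if c = i then 1 - lam $ i else 0)"
    by (simp add: sum.distrib)
  also have "\<dots> = lam $ i * (\<Sum>c\<in>UNIV. wt u c) + (1 - lam $ i)"
    by (simp add: sum_distrib_left)
  finally have h: "(\<Sum>c\<in>UNIV. wt (i # u) c) = lam $ i * (\<Sum>c\<in>UNIV. wt u c) + (1 - lam $ i)" .
  have "sc (i # u) + (\<Sum>c\<in>UNIV. wt (i # u) c) = lam $ i * (sc u + (\<Sum>c\<in>UNIV. wt u c)) + (1 - lam $ i)"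
    unfolding h by (simp add: algebra_simps)
  then show ?case using Cons by simp
qed

lemma wt_nonneg: "0 \<le> wt u c"
proof (induction u)
  case Nil then show ?case by simp
next
  case (Cons i u)
  have "0 \<le> lam $ i * wt u c" using Cons lam_pos[of i] by simp
  moreover have "0 \<le> (if c = i then 1 - lam $ i else 0)" using lam_lt1[of i] by simp
  ultimately show ?case by simp
qed

lemma wt_pos: "c \<in> set u \<Longrightarrow> 0 < wt u c"
proof (induction u)
  case Nil then show ?case by simp
next
  case (Cons i u)
  show ?case
  proof (cases "c = i")
    case True
    then have "0 < 1 - lam $ i" using lam_lt1 by simp
    moreover have "0 \<le> lam $ i * wt u c" using lam_pos[of i] wt_nonneg[of u c] by simp
    ultimately show ?thesis using True by simp
  next
    case False
    then have "c \<in> set u" using Cons by simp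
    then have "0 < lam $ i * wt u c" using Cons lam_pos[of i] by simp
    then show ?thesis using False by simp
  qed
qed

lemma wt_zero: "c \<notin> set u \<Longrightarrow> wt u c = 0"
  by (induction u) auto

lemma AC:
  assumes A: "affine A" and y: "y \<in> A" and v: "v \<in> A"
    and eq: "y = s *\<^sub>R v + (\<Sum>c\<in>UNIV. w c *\<^sub>R (q c :: 'a))"
    and sum1: "s + (\<Sum>c\<in>UNIV. w c) = 1"
    and w0: "w c0 \<noteq> 0"
    and oth: "\<And>c. c \<noteq> c0 \<Longrightarrow> w c \<noteq> 0 \<Longrightarrow> q c \<in> A"
  shows "q (c0 :: 'i) \<in> A"
proof -
  define T where "T = (\<lambda>x. x - y) ` A"
  have T: "subspace T" unfolding T_def using A y by (rule affine_diffs_subspace_subtract)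
  have memT: "x - y \<in> T" if "x \<in> A" for x using that by (simp add: T_def)
  have "(\<Sum>c\<in>UNIV. w c *\<^sub>R (q c - y)) + s *\<^sub>R (v - y) =
        (\<Sum>c\<in>UNIV. w c *\<^sub>R q c) + s *\<^sub>R v - (s + (\<Sum>c\<in>UNIV. w c)) *\<^sub>R y"
    by (simp add: scaleR_diff_right sum_subtractf scaleR_sum_left algebra_simps)
  also have "\<dots> = 0" using eq sum1 by simp
  finally have z: "(\<Sum>c\<in>UNIV. w c *\<^sub>R (q c - y)) + s *\<^sub>R (v - y) = 0" .
  have split: "(\<Sum>c\<in>UNIV. w c *\<^sub>R (q c - y)) = w c0 *\<^sub>R (q c0 - y) + (\<Sum>c\<in>UNIV - {c0}. w c *\<^sub>R (q c - y))"
    by (simp add: sum.remove[of UNIV c0])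
  have rest: "(\<Sum>c\<in>UNIV - {c0}. w c *\<^sub>R (q c - y)) \<in> T"
  proof (rule subspace_sum[OF T])
    fix c assume c: "c \<in> UNIV - {c0}"
    show "w c *\<^sub>R (q c - y) \<in> T"
    proof (cases "w c = 0")
      case True then show ?thesis using subspace_0[OF T] by simp
    next
      case False
      then show ?thesis using oth[of c] c memT subspace_scale[OF T] by simp
    qed
  qed
  have "w c0 *\<^sub>R (q c0 - y) + ((\<Sum>c\<in>UNIV - {c0}. w c *\<^sub>R (q c - y)) + s *\<^sub>R (v - y)) = 0"
    using z unfolding split by (simp only: add.assoc)
  then have eqn: "w c0 *\<^sub>R (q c0 - y) = - ((\<Sum>c\<in>UNIV - {c0}. w c *\<^sub>R (q c - y)) + s *\<^sub>R (v - y))"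
    by (simp only: eq_neg_iff_add_eq_0)
  have mem: "(\<Sum>c\<in>UNIV - {c0}. w c *\<^sub>R (q c - y)) + s *\<^sub>R (v - y) \<in> T"
    using rest memT[OF v] subspace_add[OF T] subspace_scale[OF T] by simp
  have "w c0 *\<^sub>R (q c0 - y) \<in> T" unfolding eqn by (rule subspace_neg[OF T mem])
  then have "(1 / w c0) *\<^sub>R (w c0 *\<^sub>R (q c0 - y)) \<in> T" using subspace_scale[OF T] by blast
  then have "q c0 - y \<in> T" using w0 by simp
  then obtain x where "x \<in> A" "q c0 - y = x - y" unfolding T_def by auto
  then show ?thesis by simp
qed

definition zf :: "nat \<Rightarrow> 'a" where "zf x = fp (Rx x)"

lemma Rx_ne: "Rx x \<noteq> []"
proof
  assume "Rx x = []"
  then have "length (Rx x) = 0" by simp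
  with L_pos show False by simp
qed

lemma sc_rotate: "sc (rotate n xs) = sc xs"
proof -
  let ?m = "n mod length xs"
  have "sc xs = sc (take ?m xs) * sc (drop ?m xs)" using sc_append[of "take ?m xs" "drop ?m xs"] by simp
  moreover have "sc (rotate n xs) = sc (drop ?m xs) * sc (take ?m xs)"
    using sc_append[of "drop ?m xs" "take ?m xs"] by (simp add: rotate_drop_take)
  ultimately show ?thesis by (simp add: mult.commute)
qed

lemma sc_Rx: "sc (Rx x) = sc Wl"
  by (simp add: Rx_def sc_rotate)

lemma Rx_nth: "n < L \<Longrightarrow> Rx x ! n = W ((k * x + n) mod L)"
  by (simp add: Rx_def nth_rotate Wl_def L_pos)

lemma take_Rx: assumes x: "x < B" shows "take k (Rx x) = replicate (k - 1) (e 0) @ [e x]"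
proof (rule nth_equalityI)
  show "length (take k (Rx x)) = length (replicate (k - 1) (e 0) @ [e x])"
    using k_lt_L k1 by simp
  fix t assume "t < length (take k (Rx x))"
  then have t: "t < k" using k_lt_L by simp
  have "take k (Rx x) ! t = W (k * x + t)"
    using t kx_bound[OF x t] k_lt_L by (simp add: Rx_nth)
  moreover have "(replicate (k - 1) (e 0) @ [e x]) ! t = (if t < k - 1 then e 0 else e x)"
    using t by (simp add: nth_append)
  moreover have "W (k * x + t) = (if t < k - 1 then e 0 else e x)"
  proof (cases "t < k - 1")
    case True then show ?thesis using W_small[OF x True] by simp
  next
    case False then have "t = k - 1" using t by simp
    then show ?thesis using W_last[OF x] by simp
  qed
  ultimately show "take k (Rx x) ! t = (replicate (k - 1) (e 0) @ [e x]) ! t" by simp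
qed

lemma Rx_Suc: "Rx (Suc x) = drop k (Rx x) @ take k (Rx x)"
proof -
  have "Rx (Suc x) = rotate k (Rx x)" by (simp add: Rx_def rotate_rotate add.commute)
  also have "\<dots> = drop k (Rx x) @ take k (Rx x)" using k_lt_L by (simp add: rotate_drop_take)
  finally show ?thesis .
qed

lemma Rx_last: "Rx (B - 1) = drop (k * (B - 1)) Wl @ take (k * (B - 1)) Wl"
proof -
  have "k * (B - 1) < L" using kx_bound[of "B - 1" 0] B2 k1 by simp
  then show ?thesis by (simp add: Rx_def rotate_drop_take)
qed

lemma Rx_0: "Rx 0 = take (k * (B - 1)) Wl @ drop (k * (B - 1)) Wl"
  by (simp add: Rx_def)

definition Aff where "Aff = affine hull (zf ` {..<B})"

lemma zf_in: "x < B \<Longrightarrow> zf x \<in> Aff"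
  unfolding Aff_def by (rule hull_inc) simp

lemma step_rel:
  assumes "X @ Y = Rx x" "Y @ X = Rx x'" "x < B" "x' < B"
    and Xe: "e x \<in> set X" and Xo: "\<And>c. c \<in> set X \<Longrightarrow> c \<noteq> e x \<Longrightarrow> p c \<in> Aff"
  shows "p (e x) \<in> Aff"
proof -
  have XY: "X @ Y \<noteq> []" using assms(1) Rx_ne by simp
  have "zf x = wm X (zf x')" unfolding zf_def using fp_rot[OF XY] assms(1,2) by simp
  then have eq: "zf x = sc X *\<^sub>R zf x' + (\<Sum>c\<in>UNIV. wt X c *\<^sub>R p c)" by (simp add: wm_wt)
  show ?thesis
  proof (rule AC[OF _ zf_in[OF assms(3)] zf_in[OF assms(4)] eq sum_wt])
    show "affine Aff" unfolding Aff_def by simp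
    show "wt X (e x) \<noteq> 0" using wt_pos[OF Xe] by simp
    show "p c \<in> Aff" if "c \<noteq> e x" "wt X c \<noteq> 0" for c
      using Xo[of c] that wt_zero[of c X] by auto
  qed
qed

lemma p_in_Aff: "x < B \<Longrightarrow> p (e x) \<in> Aff"
proof (induction x rule: less_induct)
  case (less x)
  show ?case
  proof (cases "x + 1 < B")
    case True
    show ?thesis
    proof (rule step_rel[of "take k (Rx x)" "drop k (Rx x)" x "Suc x"])
      show "take k (Rx x) @ drop k (Rx x) = Rx x" by simp
      show "drop k (Rx x) @ take k (Rx x) = Rx (Suc x)" by (simp add: Rx_Suc)
      show "x < B" "Suc x < B" using True by simp_all
      show "e x \<in> set (take k (Rx x))" using take_Rx[OF less.prems] by simp
      fix c assume c: "c \<in> set (take k (Rx x))" "c \<noteq> e x"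
      have "c \<in> set (replicate (k - 1) (e 0) @ [e x])" using c(1) take_Rx[OF less.prems] by simp
      then have "c = e 0 \<or> c = e x" by (auto simp: set_replicate_conv_if split: if_splits)
      then have c0: "c = e 0" using c(2) by simp
      then have "0 < x" using c(2) by (cases "x = 0") auto
      then show "p c \<in> Aff" using less.IH[of 0] less.prems c0 by simp
    qed
  next
    case False
    then have xB: "x = B - 1" using less.prems by simp
    show ?thesis
    proof (rule step_rel[of "drop (k * (B - 1)) Wl" "take (k * (B - 1)) Wl" x 0])
      show "drop (k * (B - 1)) Wl @ take (k * (B - 1)) Wl = Rx x" using Rx_last xB by simp
      show "take (k * (B - 1)) Wl @ drop (k * (B - 1)) Wl = Rx 0" by (rule Rx_0[symmetric])
      show "x < B" "0 < B" using less.prems B_pos by simp_all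
      have idx: "k * (B - 1) + (k - 1) < L" using kx_bound[of "B - 1" "k - 1"] B2 k1 by simp
      have "drop (k * (B - 1)) Wl ! (k - 1) = W (k * (B - 1) + (k - 1))"
        using idx by (simp add: Wl_def)
      also have "\<dots> = e (B - 1)" using W_last[of "B - 1"] B2 by simp
      finally have "drop (k * (B - 1)) Wl ! (k - 1) = e x" using xB by simp
      moreover have "k - 1 < length (drop (k * (B - 1)) Wl)" using idx by simp
      ultimately show "e x \<in> set (drop (k * (B - 1)) Wl)" using nth_mem[of "k - 1" "drop (k * (B - 1)) Wl"] by simp
      fix c assume c: "c \<in> set (drop (k * (B - 1)) Wl)" "c \<noteq> e x"
      obtain y where y: "y < B" "c = e y" using e_surj by blast
      then have "y < x" using c(2) xB by (cases "y = B - 1") auto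
      then show "p c \<in> Aff" using less.IH y less.prems by simp
    qed
  qed
qed

lemma Aff_UNIV: "Aff = UNIV"
proof -
  have "range p \<subseteq> Aff"
  proof
    fix z assume "z \<in> range p"
    then obtain c where "z = p c" by auto
    moreover obtain y where "y < B" "c = e y" using e_surj by blast
    ultimately show "z \<in> Aff" using p_in_Aff by simp
  qed
  then have "affine hull (range p) \<subseteq> Aff"
    unfolding Aff_def by (simp add: hull_minimal)
  then show ?thesis using aff by auto
qed

definition Del where "Del = convex hull (zf ` {..<B})"
definition V where "V = interior Del"

lemma Del_compact: "compact Del"
  unfolding Del_def by (intro compact_convex_hull finite_imp_compact) simp

lemma V_ne: "V \<noteq> {}"
proof -
  have ah: "affine hull Del = UNIV" using Aff_UNIV by (simp add: Del_def Aff_def)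
  have "rel_interior Del \<noteq> {}"
    using rel_interior_eq_empty[of Del] B_pos unfolding Del_def by (auto simp: convex_convex_hull)
  then show ?thesis unfolding V_def using rel_interior_interior[OF ah] by simp
qed

lemma V_sub: "V \<subseteq> Del" unfolding V_def by (rule interior_subset)

lemma open_V: "open V" unfolding V_def by simp

abbreviation rho where "rho \<equiv> sc Wl"

lemma rho_pos: "0 < rho" by (rule sc_pos)
lemma rho_lt1: "rho < 1"
proof -
  have "Wl \<noteq> []" using L_pos by (auto simp: Wl_def)
  then show ?thesis by (rule sc_lt1)
qed

lemma wm_Rx: "x < B \<Longrightarrow> wm (Rx x) y = rho *\<^sub>R y + (1 - rho) *\<^sub>R zf x"
  using wm_fp[OF Rx_ne, of x y] by (simp add: sc_Rx zf_def)

lemma cover: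
  assumes y: "y \<in> Del"
  shows "\<exists>x<B. \<exists>y'\<in>Del. y = wm (Rx x) y'"
proof -
  obtain F where F: "finite F" "F \<subseteq> zf ` {..<B}" "card F \<le> DIM('a) + 1" "y \<in> convex hull F"
  proof -
    have "y \<in> {x. \<exists>S. finite S \<and> S \<subseteq> zf ` {..<B} \<and> card S \<le> DIM('a) + 1 \<and> x \<in> convex hull S}"
      using y unfolding Del_def by (subst (asm) caratheodory)
    then show ?thesis using that by blast
  qed
  obtain u where u: "\<forall>v\<in>F. 0 \<le> u v" "sum u F = 1" "(\<Sum>v\<in>F. u v *\<^sub>R v) = y"
    using F(4) unfolding convex_hull_finite[OF F(1)] by blast
  have Fne: "F \<noteq> {}" using u(2) by auto
  have "Max (u ` F) \<in> u ` F" using Fne F(1) by (intro Max_in) auto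
  then obtain v0 where v0F: "v0 \<in> F" and v0m: "u v0 = Max (u ` F)" by auto
  have v0: "v0 \<in> F" "\<And>v. v \<in> F \<Longrightarrow> u v \<le> u v0"
    using v0F v0m F(1) by auto
  have "1 \<le> real (card F) * u v0"
  proof -
    have "sum u F \<le> sum (\<lambda>_. u v0) F" by (rule sum_mono) (use v0 in auto)
    then show ?thesis using u(2) by simp
  qed
  moreover have "real (card F) \<le> real DIM('a) + 1" using F(3) by simp
  moreover have "0 \<le> u v0" using u(1) v0 by simp
  ultimately have "real (card F) * u v0 \<le> (real DIM('a) + 1) * u v0" by (intro mult_right_mono)
  with \<open>1 \<le> real (card F) * u v0\<close> have h1: "1 \<le> (real DIM('a) + 1) * u v0" by linarith
  have dpos: "0 < real DIM('a) + 1" by simp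
  have h2: "1 / (real DIM('a) + 1) \<le> u v0" using h1 dpos by (simp add: divide_le_eq mult.commute)
  have h3: "1 - real DIM('a) / (real DIM('a) + 1) = 1 / (real DIM('a) + 1)" using dpos by (simp add: field_simps)
  have uv0: "1 - rho \<le> u v0" using rho h2 h3 by linarith
  obtain x where x: "x < B" "v0 = zf x" using v0 F(2) by auto
  define u' where "u' v = (u v - (if v = v0 then 1 - rho else 0)) / rho" for v
  define y' where "y' = (\<Sum>v\<in>F. u' v *\<^sub>R v)"
  have "y' \<in> convex hull F"
    unfolding convex_hull_finite[OF F(1)]
  proof (clarify, intro exI conjI)
    show "\<forall>v\<in>F. 0 \<le> u' v" using u(1) uv0 rho_pos by (auto simp: u'_def)
    show "sum u' F = 1"
      using rho_pos u(2) v0(1) F(1)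
      by (simp add: u'_def sum_divide_distrib[symmetric] sum_subtractf sum.delta)
    show "(\<Sum>v\<in>F. u' v *\<^sub>R v) = y'" by (simp add: y'_def)
  qed
  then have y'D: "y' \<in> Del" using F(2) unfolding Del_def by (meson hull_mono subsetD)
  have "rho *\<^sub>R y' = (\<Sum>v\<in>F. (u v - (if v = v0 then 1 - rho else 0)) *\<^sub>R v)"
    using rho_pos by (simp add: y'_def u'_def scaleR_sum_right)
  also have "\<dots> = y - (1 - rho) *\<^sub>R v0"
    using u(3) v0(1) F(1) by (simp add: scaleR_diff_left sum_subtractf if_distrib[of "\<lambda>t. t *\<^sub>R _"] sum.delta cong: if_cong)
  finally have "y = rho *\<^sub>R y' + (1 - rho) *\<^sub>R zf x" using x by (simp add: algebra_simps)
  then have "y = wm (Rx x) y'" using wm_Rx[OF x(1)] by simp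
  then show ?thesis using x(1) y'D by blast
qed

lemma pref_seqc: "pref (seqc xs) (m * L + L) = pref (seqc xs) (m * L) @ Rx (xs m)"
proof -
  have "pref (seqc xs) (m * L + L) = pref (seqc xs) (m * L) @ pref (\<lambda>n. seqc xs (n + m * L)) L"
    by (rule pref_add)
  moreover have "pref (\<lambda>n. seqc xs (n + m * L)) L = Rx (xs m)"
  proof (rule nth_equalityI)
    show "length (pref (\<lambda>n. seqc xs (n + m * L)) L) = length (Rx (xs m))" by simp
    fix n assume "n < length (pref (\<lambda>n. seqc xs (n + m * L)) L)"
    then have n: "n < L" by simp
    have "(n + m * L) div L = m" "(n + m * L) mod L = n" using n by simp_all
    then show "pref (\<lambda>n. seqc xs (n + m * L)) L ! n = Rx (xs m) ! n"
      using n by (simp add: pref_def seqc_def Rx_nth add.commute)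
  qed
  ultimately show ?thesis by simp
qed

lemma Del_coding:
  assumes y: "y \<in> Del"
  shows "\<exists>xs. (\<forall>m. xs m < B) \<and> coding S (seqc xs) = y"
proof -
  have "\<forall>v\<in>Del. \<exists>q. fst q < B \<and> snd q \<in> Del \<and> v = wm (Rx (fst q)) (snd q)"
  proof
    fix v assume "v \<in> Del"
    then obtain x y' where "x < B" "y' \<in> Del" "v = wm (Rx x) y'" using cover by blast
    then show "\<exists>q. fst q < B \<and> snd q \<in> Del \<and> v = wm (Rx (fst q)) (snd q)"
      by (intro exI[of _ "(x, y')"]) simp
  qed
  from bchoice[OF this] obtain g where g0: "\<forall>v\<in>Del. fst (g v) < B \<and> snd (g v) \<in> Del \<and> v = wm (Rx (fst (g v))) (snd (g v))"
    by (elim exE)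
  then have g: "\<And>v. v \<in> Del \<Longrightarrow> fst (g v) < B \<and> snd (g v) \<in> Del \<and> v = wm (Rx (fst (g v))) (snd (g v))"
    by (rule bspec)
  define ys where "ys = rec_nat y (\<lambda>_ v. snd (g v))"
  have ys0: "ys 0 = y" and ysS: "\<And>n. ys (Suc n) = snd (g (ys n))" by (simp_all add: ys_def)
  define xs where "xs n = fst (g (ys n))" for n
  have ysD: "ys n \<in> Del" for n
    by (induction n) (use y g in \<open>auto simp: ys0 ysS\<close>)
  have xsB: "xs m < B" for m using g[OF ysD[of m]] by (simp add: xs_def)
  have rep: "y = wm (pref (seqc xs) (m * L)) (ys m)" for m
  proof (induction m)
    case 0 then show ?case by (simp add: ys0 pref_def)
  next
    case (Suc m)
    have h1: "ys m = wm (Rx (xs m)) (ys (Suc m))" using g[OF ysD[of m]] by (simp add: xs_def ysS)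
    have h2: "pref (seqc xs) (Suc m * L) = pref (seqc xs) (m * L) @ Rx (xs m)"
      using pref_seqc[of xs m] by (simp add: add.commute)
    show ?case using Suc h1 h2 by (simp add: wm_append)
  qed
  obtain Bd where Bd: "\<And>v. v \<in> Del \<Longrightarrow> norm v \<le> Bd"
    using compact_imp_bounded[OF Del_compact] bounded_iff by blast
  have "dist y (coding S (seqc xs)) \<le> rr ^ m * (Bd + Mp)" for m
  proof -
    have "dist y (coding S (seqc xs)) \<le> rr ^ (m * L) * (norm (ys m) + Mp)"
      using dist_wm_coding[of "seqc xs" "m * L" "ys m"] rep[of m] by simp
    also have "\<dots> \<le> rr ^ m * (Bd + Mp)"
    proof (rule mult_mono)
      show "rr ^ (m * L) \<le> rr ^ m" using rr_pos rr_lt1 L_pos by (intro power_decreasing) auto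
      show "norm (ys m) + Mp \<le> Bd + Mp" using Bd[OF ysD[of m]] by simp
    qed (use rr_pos Mp_nonneg in auto)
    finally show ?thesis .
  qed
  then have "dist y (coding S (seqc xs)) = 0"
  proof -
    assume H: "\<And>m. dist y (coding S (seqc xs)) \<le> rr ^ m * (Bd + Mp)"
    have "dist y (coding S (seqc xs)) \<le> 0"
      by (rule LIMSEQ_le_const[OF rr_pow_tendsto[of "Bd + Mp"]]) (use H in auto)
    then show ?thesis by simp
  qed
  then show ?thesis using xsB by auto
qed

lemma coding_pfx: "coding S (pfx u a) = wm u (coding S a)"
proof -
  have "coding S (pfx u a) = wm (pref (pfx u a) (length u)) (coding S (\<lambda>n. pfx u a (n + length u)))"
    by (rule coding_shift)
  moreover have "pref (pfx u a) (length u) = u"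
    by (rule nth_equalityI) (auto simp: pref_def pfx_def)
  moreover have "(\<lambda>n. pfx u a (n + length u)) = a" by (simp add: pfx_def fun_eq_iff)
  ultimately show ?thesis by simp
qed

definition U where "U = (\<Union>u. wm u ` V)"

lemma wm_image: "wm u ` A = (\<lambda>v. wm u 0 + sc u *\<^sub>R v) ` A"
proof -
  have h: "wm u v = wm u 0 + sc u *\<^sub>R v" for v using wm_affine[of u v] by (simp add: add.commute)
  show ?thesis by (rule image_cong[OF refl h])
qed

lemma open_wm_image: "open A \<Longrightarrow> open (wm u ` A)"
  unfolding wm_image using sc_pos[of u] by (intro open_affinity) auto

lemma open_U: "open U"
  unfolding U_def by (intro open_UN ballI open_wm_image open_V)

lemma U_normal: "U \<subseteq> normal_points k S"
proof
  fix z assume "z \<in> U"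
  then obtain u v where z: "z = wm u v" "v \<in> V" unfolding U_def by blast
  obtain xs where xs: "\<forall>m. xs m < B" "coding S (seqc xs) = v"
    using Del_coding z(2) V_sub by blast
  have "simply_normal k (pfx u (seqc xs))"
    by (intro BD_imp_normal BD_pfx BD_seqc) (use xs in auto)
  moreover have "coding S (pfx u (seqc xs)) = z" using coding_pfx xs z by simp
  ultimately show "z \<in> normal_points k S"
    unfolding normal_points_def attractor_eq RC_def by blast
qed

lemma U_sub: "U \<subseteq> RC"
  using U_normal unfolding normal_points_def attractor_eq by blast

lemma RC_closure_U: "RC \<subseteq> closure U"
proof
  fix x assume "x \<in> RC"
  then obtain a where x: "x = coding S a" unfolding RC_def by auto
  obtain v0 where v0: "v0 \<in> V" using V_ne by auto
  have "(\<lambda>j. wm (pref a j) v0) \<longlonglongrightarrow> x"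
    unfolding x by (rule wm_pref_tendsto_bounded[where B = "norm v0"]) simp
  moreover have "\<forall>j. wm (pref a j) v0 \<in> U" using v0 unfolding U_def by blast
  ultimately show "x \<in> closure U" unfolding closure_sequential
    by (intro exI[of _ "\<lambda>j. wm (pref a j) v0"]) simp
qed

end


context main
begin

lemma E_negl: "negligible (RC - U)"
proof -
  let ?\<mu> = "measure lebesgue"
  let ?d = "DIM('a)"
  have Ecomp: "compact (RC - U)"
    using RC_compact open_U by (simp add: Diff_eq compact_Int_closed closed_Compl)
  then have Em: "RC - U \<in> lmeasurable" by (rule lmeasurable_compact)
  obtain Mv where Mv: "\<And>v. v \<in> V \<Longrightarrow> norm v \<le> Mv"
    using compact_imp_bounded[OF Del_compact] V_sub unfolding bounded_iff by blast
  have Mv0: "0 \<le> Mv" using V_ne Mv norm_ge_zero by (metis all_not_in_conv order_trans)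
  define K0 where "K0 = Mv + Mp + 1"
  have K0: "0 < K0" using Mv0 Mp_nonneg by (simp add: K0_def)
  have Vb: "bounded V" using compact_imp_bounded[OF Del_compact] V_sub bounded_subset by blast
  have Vm: "V \<in> lmeasurable" using Vb open_V by (rule lmeasurable_open)
  have mV: "0 < ?\<mu> V"
  proof -
    have "\<not> negligible V" using open_not_negligible[OF open_V V_ne] .
    then have "?\<mu> V \<noteq> 0" using negligible_iff_measure0[OF Vm] by simp
    then show ?thesis using measure_nonneg[of lebesgue V] by linarith
  qed
  have mB: "0 < ?\<mu> (ball (0::'a) 1)" using content_ball_pos[of 1 "0::'a"] by simp
  define c where "c = ?\<mu> V / (K0 ^ ?d * ?\<mu> (ball (0::'a) 1))"
  have cpos: "0 < c" unfolding c_def using mV mB K0 by simp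
  have dens: "\<exists>r>0. r < d \<and> c * ?\<mu> (ball x r) \<le> ?\<mu> (ball x r - (RC - U))"
    if x: "x \<in> RC - U" and d: "0 < d" for x d
  proof -
  obtain a where xa: "x = coding S a" using x unfolding RC_def by auto
  have "eventually (\<lambda>j. rr ^ j * K0 < d) sequentially"
    using order_tendstoD(2)[OF rr_pow_tendsto[of K0] d] .
  then obtain N where N: "\<And>n. n \<ge> N \<Longrightarrow> rr ^ n * K0 < d" unfolding eventually_sequentially by blast
  define j where "j = N"
  have j: "rr ^ j * K0 < d" using N[of N] by (simp add: j_def)
  define P where "P = pref a j"
  define s where "s = sc P"
  have s: "0 < s" "s \<le> rr ^ j" using sc_pos sc_le[of P] by (simp_all add: s_def P_def)
  define rad where "rad = s * K0"
  have rad: "0 < rad" "rad < d"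
  proof -
    show "0 < rad" using s K0 by (simp add: rad_def)
    have "rad \<le> rr ^ j * K0" using s K0 by (simp add: rad_def mult_right_mono)
    then show "rad < d" using j by simp
  qed
  have sub1: "wm P ` V \<subseteq> ball x rad"
  proof
    fix z assume "z \<in> wm P ` V"
    then obtain v where v: "v \<in> V" "z = wm P v" by auto
    have xs: "x = wm P (coding S (\<lambda>n. a (n + j)))" unfolding xa P_def by (rule coding_shift)
    have "dist x z = s * dist (coding S (\<lambda>n. a (n + j))) v"
      unfolding xs v(2) s_def by (rule dist_wm)
    also have "dist (coding S (\<lambda>n. a (n + j))) v \<le> norm (coding S (\<lambda>n. a (n + j))) + norm v"
      by (simp add: dist_norm norm_triangle_ineq4)
    also have "\<dots> \<le> Mp + Mv" using norm_coding Mv[OF v(1)] by (simp add: add_mono)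
    also have "s * (Mp + Mv) < s * K0" using s(1) by (simp add: K0_def)
    finally show "z \<in> ball x rad" by (simp add: rad_def s(1))
  qed
  have sub2: "wm P ` V \<subseteq> U" unfolding U_def by blast
  have sub: "wm P ` V \<subseteq> ball x rad - (RC - U)" using sub1 sub2 by blast
  have img: "wm P ` V = (\<lambda>v. s *\<^sub>R v + wm P 0) ` V"
    unfolding wm_image s_def by (simp add: add.commute)
  have mimg: "?\<mu> (wm P ` V) = s ^ ?d * ?\<mu> V"
    unfolding img using measure_lebesgue_affine[of s "wm P 0" V] s(1) by simp
  have "?\<mu> (wm P ` V) \<le> ?\<mu> (ball x rad - (RC - U))"
  proof (rule measure_mono_fmeasurable[OF sub])
    have "bounded (wm P ` V)" by (rule bounded_subset[OF bounded_ball sub1])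
    then have "wm P ` V \<in> lmeasurable" using open_wm_image[OF open_V] by (rule lmeasurable_open)
    then show "wm P ` V \<in> sets lebesgue" by (rule fmeasurableD)
    show "ball x rad - (RC - U) \<in> fmeasurable lebesgue"
      using Em by (intro fmeasurable_Diff) auto
  qed
  moreover have "c * ?\<mu> (ball x rad) = s ^ ?d * ?\<mu> V"
  proof -
    have "?\<mu> (ball x rad) = rad ^ ?d * ?\<mu> (ball (0::'a) 1)"
      using content_ball_conv_unit_ball[of rad x] rad(1) by simp
    then show ?thesis using mB K0 unfolding c_def rad_def by (simp add: power_mult_distrib field_simps)
  qed
  ultimately show "\<exists>r>0. r < d \<and> c * ?\<mu> (ball x r) \<le> ?\<mu> (ball x r - (RC - U))"
    using rad mimg by (intro exI[of _ rad]) simp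
  qed
  show ?thesis by (rule density_negligible[OF Em cpos dens])
qed

lemma main_result:
  "(\<exists>U. openin (top_of_set (attractor S)) U \<and> attractor S \<subseteq> closure U \<and> U \<subseteq> normal_points k S) \<and>
   (AE x in lebesgue. x \<in> attractor S \<longrightarrow> x \<in> normal_points k S)"
proof
  show "\<exists>U. openin (top_of_set (attractor S)) U \<and> attractor S \<subseteq> closure U \<and> U \<subseteq> normal_points k S"
  proof (intro exI conjI)
    show "openin (top_of_set (attractor S)) U"
      unfolding attractor_eq openin_open using open_U U_sub by (intro exI[of _ U]) auto
    show "attractor S \<subseteq> closure U" unfolding attractor_eq by (rule RC_closure_U)
    show "U \<subseteq> normal_points k S" by (rule U_normal)
  qed
  show "AE x in lebesgue. x \<in> attractor S \<longrightarrow> x \<in> normal_points k S"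
  proof (rule AE_I'[of "RC - U"])
    show "RC - U \<in> null_sets lebesgue" using E_negl by (simp add: negligible_iff_null_sets)
    show "{x \<in> space lebesgue. \<not> (x \<in> attractor S \<longrightarrow> x \<in> normal_points k S)} \<subseteq> RC - U"
      using U_normal unfolding attractor_eq by blast
  qed
qed

end

theorem theorem3p2:
  fixes p :: "'i::finite \<Rightarrow> 'a::euclidean_space" and k :: nat
  assumes "inj p"
    and "affine hull (range p) = UNIV"
    and "k \<ge> 1"
  shows "\<exists>Opn \<subseteq> (param_set DIM('a) k :: (real^'i) set).
           openin (top_of_set (param_set DIM('a) k)) Opn \<and>
           param_set DIM('a) k \<subseteq> closure Opn \<and>
           (\<forall>lam \<in> Opn.
              (\<exists>U. openin (top_of_set (attractor (ifs_map lam p))) U \<and>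
                   attractor (ifs_map lam p) \<subseteq> closure U \<and>
                   U \<subseteq> normal_points k (ifs_map lam p)) \<and>
              (AE x in lebesgue. x \<in> attractor (ifs_map lam p) \<longrightarrow>
                   x \<in> normal_points k (ifs_map lam p)))"
proof -
  let ?P = "param_set DIM('a) k :: (real^'i) set"
  obtain e0 :: "nat \<Rightarrow> 'i" where e0: "bij_betw e0 {..<CARD('i)} UNIV"
    using ex_bij_betw_nat_finite[of "UNIV :: 'i set"] by (auto simp: atLeast0LessThan)
  have B2: "2 \<le> CARD('i)"
  proof (rule ccontr)
    assume "\<not> 2 \<le> CARD('i)"
    moreover have "0 < CARD('i)" by (rule finite_UNIV_card_ge_0) simp
    ultimately have "CARD('i) = 1" by linarith
    then obtain i0 :: 'i where "UNIV = {i0}" using card_1_singletonE by blast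
    then have "range p = {p i0}" by auto
    then have "affine hull (range p) = {p i0}" by simp
    then have U1: "(UNIV :: 'a set) = {p i0}" using assms(2) by simp
    have "p i0 + (SOME b. b \<in> Basis) \<in> (UNIV :: 'a set)" by simp
    then have "p i0 + (SOME b. b \<in> Basis) = p i0" unfolding U1 by simp
    then have "(SOME b. b \<in> Basis) = (0::'a)" by simp
    then show False using SOME_Basis nonzero_Basis by metis
  qed
  have key: "(\<exists>U. openin (top_of_set (attractor (ifs_map lam p))) U \<and>
                   attractor (ifs_map lam p) \<subseteq> closure U \<and>
                   U \<subseteq> normal_points k (ifs_map lam p)) \<and>
              (AE x in lebesgue. x \<in> attractor (ifs_map lam p) \<longrightarrow>
                   x \<in> normal_points k (ifs_map lam p))" if lam: "lam \<in> ?P" for lam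
  proof -
    have lam01: "0 < lam $ i" "lam $ i < 1" for i using lam by (auto simp: param_set_def)
    have hf: "hifs lam" by unfold_locales (use lam01 in auto)
    have wr: "wrd e0 k CARD('i)" by unfold_locales (use e0 assms(3) B2 in auto)
    interpret hifs lam p by (rule hf)
    interpret wrd e0 k "CARD('i)" by (rule wr)
    have "sc Wl = (\<Prod>s<L. lam $ W s)"
      by (simp add: sc_def Wl_def prod_list_upt comp_def)
    also have "\<dots> = (\<Prod>c\<in>UNIV. (lam $ c) ^ (k * CARD('i) ^ (k - 1)))" by (rule prod_Wl)
    finally have "real DIM('a) / (real DIM('a) + 1) \<le> sc Wl" using lam by (simp add: param_set_def)
    then have mn: "main lam p e0 k CARD('i)"
      by (intro main.intro hf wr main_axioms.intro assms(2))
    show ?thesis by (rule main.main_result[OF mn])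
  qed
  have K: "\<forall>lam\<in>?P. (\<exists>U. openin (top_of_set (attractor (ifs_map lam p))) U \<and>
                   attractor (ifs_map lam p) \<subseteq> closure U \<and>
                   U \<subseteq> normal_points k (ifs_map lam p)) \<and>
              (AE x in lebesgue. x \<in> attractor (ifs_map lam p) \<longrightarrow>
                   x \<in> normal_points k (ifs_map lam p))" using key by blast
  show ?thesis using K by (intro exI[of _ ?P]) (simp add: closure_subset)
qed


end
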